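(* Let $k$ be a field of characteristic $\neq 2$, let $\mathfrak g_\boxtimes$ be the Tetrahedron algebra over $k$, and let $\mathfrak f$ be the Lie algebra over $k$ generated by $z_0,z_1,z_2$ subject to the relations, for every $i\in\{0,1,2\}$ with indices modulo $3$: $[[z_i,z_{i+1}],z_{i+2}]=0$; $[z_i,[z_i,z_{i+1}]]=z_{i+1}+[z_{i+2},z_i]$; $\bigl[[z_{i+1},[z_{i+1},[z_{i+1},z_i]]],[z_{i+1},z_i]\bigr]=0$. Then there is a Lie algebra isomorphism $\Phi:\mathfrak g_\boxtimes\to\mathfrak f$ such that $\Phi(X_{01})=2(z_2-[z_1,z_2])$, $\Phi(X_{23})=2(z_2+[z_1,z_2])$, $\Phi(X_{02})=2(z_0-[z_2,z_0])$, $\Phi(X_{31})=2(z_0+[z_2,z_0])$, $\Phi(X_{03})=2(z_1-[z_0,z_1])$, $\Phi(X_{12})=2(z_1+[z_0,z_1])$.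
   Context: The Tetrahedron algebra $\mathfrak g_\boxtimes$ is the Lie algebra over $k$ with generators $X_{ij}$ ($i,j\in\{0,1,2,3\}$, $i\neq j$) and relations $X_{ij}+X_{ji}=0$ for $i\neq j$; $[X_{ij},X_{jk}]=2(X_{ij}+X_{jk})$ for mutually distinct $i,j,k$; $[X_{hi},[X_{hi},[X_{hi},X_{jk}]]]=4[X_{hi},X_{jk}]$ for mutually distinct $h,i,j,k$. *)

theory Defs
  imports Main
begin

text \<open>The free non-associative algebra over a field 'k on a set S of generators is
realised as finitely supported 'k-valued functions on binary trees whose leaves lie in S
(the basis of tree monomials); the product is the bilinear extension of grafting.
The Lie algebra presented by generators S and relations R is the quotient of this
algebra by the two-sided ideal generated by R, all squares a*a and all Jacobi
expressions.\<close>

datatype 'a mtree = Leaf 'a | Node "'a mtree" "'a mtree"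

fun leaves :: "'a mtree \<Rightarrow> 'a set" where
  "leaves (Leaf x) = {x}"
| "leaves (Node a b) = leaves a \<union> leaves b"

type_synonym ('a,'k) fm = "'a mtree \<Rightarrow> 'k"

definition FM :: "'a set \<Rightarrow> ('a,'k::field) fm set" where
  "FM S = {f. finite {t. f t \<noteq> 0} \<and> (\<forall>t. f t \<noteq> 0 \<longrightarrow> leaves t \<subseteq> S)}"

definition vzero :: "('a,'k::field) fm" where "vzero = (\<lambda>_. 0)"
definition vadd :: "('a,'k::field) fm \<Rightarrow> ('a,'k) fm \<Rightarrow> ('a,'k) fm" where
  "vadd f g = (\<lambda>t. f t + g t)"
definition vsmult :: "'k::field \<Rightarrow> ('a,'k) fm \<Rightarrow> ('a,'k) fm" where
  "vsmult c f = (\<lambda>t. c * f t)"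
definition vsub :: "('a,'k::field) fm \<Rightarrow> ('a,'k) fm \<Rightarrow> ('a,'k) fm" where
  "vsub f g = (\<lambda>t. f t - g t)"
definition vgen :: "'a \<Rightarrow> ('a,'k::field) fm" where
  "vgen x = (\<lambda>t. if t = Leaf x then 1 else 0)"
definition vbr :: "('a,'k::field) fm \<Rightarrow> ('a,'k) fm \<Rightarrow> ('a,'k) fm" where
  "vbr f g = (\<lambda>t. case t of Leaf _ \<Rightarrow> 0 | Node a b \<Rightarrow> f a * g b)"

definition jacobi :: "('a,'k::field) fm \<Rightarrow> ('a,'k) fm \<Rightarrow> ('a,'k) fm \<Rightarrow> ('a,'k) fm" where
  "jacobi a b c = vadd (vbr a (vbr b c)) (vadd (vbr b (vbr c a)) (vbr c (vbr a b)))"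

inductive_set pideal :: "'a set \<Rightarrow> ('a,'k::field) fm set \<Rightarrow> ('a,'k) fm set"
  for S :: "'a set" and R :: "('a,'k) fm set" where
  rel: "r \<in> R \<Longrightarrow> r \<in> pideal S R"
| alt: "a \<in> FM S \<Longrightarrow> vbr a a \<in> pideal S R"
| jac: "a \<in> FM S \<Longrightarrow> b \<in> FM S \<Longrightarrow> c \<in> FM S \<Longrightarrow> jacobi a b c \<in> pideal S R"
| zero: "vzero \<in> pideal S R"
| add: "x \<in> pideal S R \<Longrightarrow> y \<in> pideal S R \<Longrightarrow> vadd x y \<in> pideal S R"
| smult: "x \<in> pideal S R \<Longrightarrow> vsmult c x \<in> pideal S R"
| left: "x \<in> pideal S R \<Longrightarrow> a \<in> FM S \<Longrightarrow> vbr a x \<in> pideal S R"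
| right: "x \<in> pideal S R \<Longrightarrow> a \<in> FM S \<Longrightarrow> vbr x a \<in> pideal S R"

definition pcls :: "'a set \<Rightarrow> ('a,'k::field) fm set \<Rightarrow> ('a,'k) fm \<Rightarrow> ('a,'k) fm set" where
  "pcls S R f = {g \<in> FM S. vsub g f \<in> pideal S R}"

definition pcarrier :: "'a set \<Rightarrow> ('a,'k::field) fm set \<Rightarrow> ('a,'k) fm set set" where
  "pcarrier S R = pcls S R ` FM S"

definition prep :: "('a,'k::field) fm set \<Rightarrow> ('a,'k) fm" where
  "prep A = (SOME f. f \<in> A)"

definition padd :: "'a set \<Rightarrow> ('a,'k::field) fm set \<Rightarrow> ('a,'k) fm set \<Rightarrow> ('a,'k) fm set \<Rightarrow> ('a,'k) fm set" where
  "padd S R A B = pcls S R (vadd (prep A) (prep B))"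
definition psmult :: "'a set \<Rightarrow> ('a,'k::field) fm set \<Rightarrow> 'k \<Rightarrow> ('a,'k) fm set \<Rightarrow> ('a,'k) fm set" where
  "psmult S R c A = pcls S R (vsmult c (prep A))"
definition pbr :: "'a set \<Rightarrow> ('a,'k::field) fm set \<Rightarrow> ('a,'k) fm set \<Rightarrow> ('a,'k) fm set \<Rightarrow> ('a,'k) fm set" where
  "pbr S R A B = pcls S R (vbr (prep A) (prep B))"
definition pgen :: "'a set \<Rightarrow> ('a,'k::field) fm set \<Rightarrow> 'a \<Rightarrow> ('a,'k) fm set" where
  "pgen S R x = pcls S R (vgen x)"

definition plie_iso ::
  "'a set \<Rightarrow> ('a,'k::field) fm set \<Rightarrow> 'b set \<Rightarrow> ('b,'k) fm set
   \<Rightarrow> (('a,'k) fm set \<Rightarrow> ('b,'k) fm set) \<Rightarrow> bool" where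
  "plie_iso S R S' R' \<Phi> \<longleftrightarrow>
     bij_betw \<Phi> (pcarrier S R) (pcarrier S' R') \<and>
     (\<forall>A\<in>pcarrier S R. \<forall>B\<in>pcarrier S R. \<Phi> (padd S R A B) = padd S' R' (\<Phi> A) (\<Phi> B)) \<and>
     (\<forall>c. \<forall>A\<in>pcarrier S R. \<Phi> (psmult S R c A) = psmult S' R' c (\<Phi> A)) \<and>
     (\<forall>A\<in>pcarrier S R. \<forall>B\<in>pcarrier S R. \<Phi> (pbr S R A B) = pbr S' R' (\<Phi> A) (\<Phi> B))"

definition tet_S :: "(nat \<times> nat) set" where
  "tet_S = {(i,j). i < 4 \<and> j < 4 \<and> i \<noteq> j}"

definition tX :: "nat \<Rightarrow> nat \<Rightarrow> (nat \<times> nat, 'k::field) fm" where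
  "tX i j = vgen (i,j)"

definition tet_R :: "(nat \<times> nat, 'k::field) fm set" where
  "tet_R =
     {vadd (tX i j) (tX j i) | i j. i < 4 \<and> j < 4 \<and> i \<noteq> j}
   \<union> {vsub (vbr (tX i j) (tX j k)) (vsmult 2 (vadd (tX i j) (tX j k))) | i j k.
        i < 4 \<and> j < 4 \<and> k < 4 \<and> i \<noteq> j \<and> j \<noteq> k \<and> i \<noteq> k}
   \<union> {vsub (vbr (tX h i) (vbr (tX h i) (vbr (tX h i) (tX j k)))) (vsmult 4 (vbr (tX h i) (tX j k)))
        | h i j k. h < 4 \<and> i < 4 \<and> j < 4 \<and> k < 4 \<and>
          h \<noteq> i \<and> h \<noteq> j \<and> h \<noteq> k \<and> i \<noteq> j \<and> i \<noteq> k \<and> j \<noteq> k}"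

definition f_S :: "nat set" where "f_S = {0,1,2}"

definition fz :: "nat \<Rightarrow> (nat, 'k::field) fm" where
  "fz i = vgen (i mod 3)"

definition f_R :: "(nat, 'k::field) fm set" where
  "f_R =
     {vbr (vbr (fz i) (fz (i+1))) (fz (i+2)) | i. i < 3}
   \<union> {vsub (vbr (fz i) (vbr (fz i) (fz (i+1)))) (vadd (fz (i+1)) (vbr (fz (i+2)) (fz i))) | i. i < 3}
   \<union> {vbr (vbr (fz (i+1)) (vbr (fz (i+1)) (vbr (fz (i+1)) (fz i)))) (vbr (fz (i+1)) (fz i)) | i. i < 3}"

abbreviation TX :: "nat \<Rightarrow> nat \<Rightarrow> (nat \<times> nat, 'k::field) fm set" where
  "TX i j \<equiv> pgen tet_S (tet_R :: (nat \<times> nat, 'k) fm set) (i,j)"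
abbreviation Z :: "nat \<Rightarrow> (nat, 'k::field) fm set" where
  "Z i \<equiv> pgen f_S (f_R :: (nat, 'k) fm set) i"
abbreviation Fadd :: "(nat, 'k::field) fm set \<Rightarrow> _ \<Rightarrow> _" where
  "Fadd \<equiv> padd f_S f_R"
abbreviation Fsmult :: "'k::field \<Rightarrow> (nat, 'k) fm set \<Rightarrow> _" where
  "Fsmult \<equiv> psmult f_S f_R"
abbreviation Fbr :: "(nat, 'k::field) fm set \<Rightarrow> _ \<Rightarrow> _" where
  "Fbr \<equiv> pbr f_S f_R"

end

theory Submission
  imports Defs
begin

definition vtree :: "'a mtree \<Rightarrow> ('a,'k::field) fm" where
  "vtree t = (\<lambda>u. if u = t then 1 else 0)"

definition fin :: "('a,'k::field) fm \<Rightarrow> bool" where "fin f \<longleftrightarrow> finite {t. f t \<noteq> 0}"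

lemma vgen_vtree: "vgen x = vtree (Leaf x)" by (simp add: vgen_def vtree_def)

lemma FM_fin: "f \<in> FM S \<Longrightarrow> fin f" by (simp add: FM_def fin_def)

lemma FM_vzero[simp]: "vzero \<in> FM S" by (simp add: FM_def vzero_def)

lemma FM_vadd[simp]: assumes "f \<in> FM S" "g \<in> FM S" shows "vadd f g \<in> FM S"
proof -
  have "{t. vadd f g t \<noteq> 0} \<subseteq> {t. f t \<noteq> 0} \<union> {t. g t \<noteq> 0}" by (auto simp: vadd_def)
  then show ?thesis using assms unfolding FM_def by (auto simp: vadd_def intro: finite_subset)
qed

lemma FM_vsmult[simp]: assumes "f \<in> FM S" shows "vsmult c f \<in> FM S"
proof -
  have "{t. vsmult c f t \<noteq> 0} \<subseteq> {t. f t \<noteq> 0}" by (auto simp: vsmult_def)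
  then show ?thesis using assms unfolding FM_def by (auto simp: vsmult_def intro: finite_subset)
qed

lemma FM_vsub[simp]: assumes "f \<in> FM S" "g \<in> FM S" shows "vsub f g \<in> FM S"
proof -
  have "{t. vsub f g t \<noteq> 0} \<subseteq> {t. f t \<noteq> 0} \<union> {t. g t \<noteq> 0}" by (auto simp: vsub_def)
  then show ?thesis using assms unfolding FM_def by (auto simp: vsub_def intro: finite_subset)
qed

lemma FM_vtree: "leaves t \<subseteq> S \<Longrightarrow> vtree t \<in> FM S"
  by (simp add: FM_def vtree_def)

lemma FM_vgen[simp]: "x \<in> S \<Longrightarrow> vgen x \<in> FM S"
  by (simp add: vgen_vtree FM_vtree)

lemma FM_vbr[simp]: assumes "f \<in> FM S" "g \<in> FM S" shows "vbr f g \<in> FM S"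
proof -
  have "{u. vbr f g u \<noteq> 0} \<subseteq> (\<lambda>(a,b). Node a b) ` ({t. f t \<noteq> 0} \<times> {t. g t \<noteq> 0})"
  proof
    fix u assume "u \<in> {u. vbr f g u \<noteq> 0}"
    then show "u \<in> (\<lambda>(a,b). Node a b) ` ({t. f t \<noteq> 0} \<times> {t. g t \<noteq> 0})"
      by (cases u) (auto simp: vbr_def)
  qed
  moreover have "finite ((\<lambda>(a,b). Node a b) ` ({t. f t \<noteq> 0} \<times> {t. g t \<noteq> 0}))"
    using assms by (simp add: FM_def)
  moreover have "leaves u \<subseteq> S" if "vbr f g u \<noteq> 0" for u
    using that assms by (auto simp: vbr_def FM_def split: mtree.splits)
  ultimately show ?thesis unfolding FM_def by (auto intro: finite_subset)
qed

lemma fin_UNIV: "fin f \<longleftrightarrow> f \<in> FM UNIV" by (simp add: FM_def fin_def)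

lemma vsub_self[simp]: "vsub f f = vzero" by (simp add: vsub_def vzero_def)
lemma vsub_vzero[simp]: "vsub f vzero = f" by (simp add: vsub_def vzero_def)
lemma vsub_eq: "vsub f g = vadd f (vsmult (-1) g)" by (auto simp: vsub_def vadd_def vsmult_def)

lemma vbr_vadd_left: "vbr (vadd f g) h = vadd (vbr f h) (vbr g h)"
  by (rule ext) (simp add: vbr_def vadd_def algebra_simps split: mtree.split)
lemma vbr_vadd_right: "vbr h (vadd f g) = vadd (vbr h f) (vbr h g)"
  by (rule ext) (simp add: vbr_def vadd_def algebra_simps split: mtree.split)
lemma vbr_vsmult_left: "vbr (vsmult c f) h = vsmult c (vbr f h)"
  by (rule ext) (simp add: vbr_def vsmult_def algebra_simps split: mtree.split)
lemma vbr_vsmult_right: "vbr h (vsmult c f) = vsmult c (vbr h f)"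
  by (rule ext) (simp add: vbr_def vsmult_def algebra_simps split: mtree.split)
lemma vbr_vzero_left[simp]: "vbr vzero h = vzero"
  by (rule ext) (simp add: vbr_def vzero_def split: mtree.split)
lemma vbr_vzero_right[simp]: "vbr h vzero = vzero"
  by (rule ext) (simp add: vbr_def vzero_def split: mtree.split)
lemma vbr_vtree: "vbr (vtree s) (vtree t) = vtree (Node s t)"
  by (rule ext) (simp add: vbr_def vtree_def split: mtree.split)

section \<open>Ideal and classes\<close>

lemma pideal_FM: assumes "R \<subseteq> FM S" shows "x \<in> pideal S R \<Longrightarrow> x \<in> FM S"
  by (induction rule: pideal.induct) (use assms in \<open>auto simp: jacobi_def\<close>)

lemma pideal_sub: "x \<in> pideal S R \<Longrightarrow> y \<in> pideal S R \<Longrightarrow> vsub x y \<in> pideal S R"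
  unfolding vsub_eq by (intro pideal.add pideal.smult)

lemma pcls_self: "f \<in> FM S \<Longrightarrow> f \<in> pcls S R f"
  by (simp add: pcls_def pideal.zero)

lemma pcls_eq_iff:
  assumes "f \<in> FM S" "g \<in> FM S"
  shows "pcls S R f = pcls S R g \<longleftrightarrow> vsub f g \<in> pideal S R"
proof
  assume "pcls S R f = pcls S R g"
  then show "vsub f g \<in> pideal S R" using pcls_self[OF assms(1), of R] by (simp add: pcls_def)
next
  assume h: "vsub f g \<in> pideal S R"
  have e1: "vsub h g = vadd (vsub h f) (vsub f g)" for h by (auto simp: vsub_def vadd_def)
  have e2: "vsub h f = vsub (vsub h g) (vsub f g)" for h by (auto simp: vsub_def vadd_def)
  show "pcls S R f = pcls S R g"
  proof (rule set_eqI)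
    fix x
    have "vsub x f \<in> pideal S R \<longleftrightarrow> vsub x g \<in> pideal S R"
    proof
      assume "vsub x f \<in> pideal S R"
      then show "vsub x g \<in> pideal S R" using h by (subst e1[of x]) (rule pideal.add)
    next
      assume "vsub x g \<in> pideal S R"
      then show "vsub x f \<in> pideal S R" using h by (subst e2[of x]) (rule pideal_sub)
    qed
    then show "x \<in> pcls S R f \<longleftrightarrow> x \<in> pcls S R g" by (simp add: pcls_def)
  qed
qed

lemma prep_pcls:
  assumes "f \<in> FM S"
  shows "prep (pcls S R f) \<in> FM S" "vsub (prep (pcls S R f)) f \<in> pideal S R"
proof -
  have "prep (pcls S R f) \<in> pcls S R f"
    unfolding prep_def by (rule someI[of _ f]) (rule pcls_self[OF assms])
  then show "prep (pcls S R f) \<in> FM S" "vsub (prep (pcls S R f)) f \<in> pideal S R"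
    by (auto simp: pcls_def)
qed

lemma padd_pcls:
  assumes "f \<in> FM S" "g \<in> FM S"
  shows "padd S R (pcls S R f) (pcls S R g) = pcls S R (vadd f g)"
proof -
  let ?p = "prep (pcls S R f)" and ?q = "prep (pcls S R g)"
  have "vsub (vadd ?p ?q) (vadd f g) = vadd (vsub ?p f) (vsub ?q g)"
    by (auto simp: vsub_def vadd_def)
  then have "vsub (vadd ?p ?q) (vadd f g) \<in> pideal S R"
    apply (simp only:) by (intro pideal.add prep_pcls(2) assms)
  then show ?thesis unfolding padd_def using prep_pcls assms by (subst pcls_eq_iff) (simp_all add: prep_pcls(1))
qed

lemma psmult_pcls:
  assumes "f \<in> FM S"
  shows "psmult S R c (pcls S R f) = pcls S R (vsmult c f)"
proof -
  let ?p = "prep (pcls S R f)"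
  have "vsub (vsmult c ?p) (vsmult c f) = vsmult c (vsub ?p f)"
    by (auto simp: vsub_def vsmult_def algebra_simps)
  then have "vsub (vsmult c ?p) (vsmult c f) \<in> pideal S R"
    apply (simp only:) by (intro pideal.smult prep_pcls(2) assms)
  then show ?thesis unfolding psmult_def using prep_pcls assms by (subst pcls_eq_iff) (simp_all add: prep_pcls(1))
qed

lemma pbr_pcls:
  assumes "f \<in> FM S" "g \<in> FM S"
  shows "pbr S R (pcls S R f) (pcls S R g) = pcls S R (vbr f g)"
proof -
  let ?p = "prep (pcls S R f)" and ?q = "prep (pcls S R g)"
  have "vsub (vbr ?p ?q) (vbr f g) = vadd (vbr (vsub ?p f) ?q) (vbr f (vsub ?q g))"
    by (rule ext) (simp add: vsub_def vadd_def vbr_def algebra_simps split: mtree.split)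
  then have "vsub (vbr ?p ?q) (vbr f g) \<in> pideal S R"
    apply (simp only:) by (intro pideal.add pideal.left pideal.right prep_pcls assms)
  then show ?thesis unfolding pbr_def using prep_pcls assms by (subst pcls_eq_iff) (simp_all add: prep_pcls(1))
qed

section \<open>Substitution homomorphisms\<close>

lemma FM_vtree_UNIV[simp]: "vtree t \<in> FM UNIV" by (simp add: FM_vtree)
lemma FM_mono: "f \<in> FM S \<Longrightarrow> f \<in> FM UNIV" by (auto simp: FM_def)

fun ev :: "('a \<Rightarrow> ('b,'k::field) fm) \<Rightarrow> 'a mtree \<Rightarrow> ('b,'k) fm" where
  "ev \<sigma> (Leaf x) = \<sigma> x"
| "ev \<sigma> (Node s t) = vbr (ev \<sigma> s) (ev \<sigma> t)"

definition Ev :: "('a \<Rightarrow> ('b,'k::field) fm) \<Rightarrow> ('a,'k) fm \<Rightarrow> ('b,'k) fm" where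
  "Ev \<sigma> f = (\<lambda>u. \<Sum>t\<in>{t. f t \<noteq> 0}. f t * ev \<sigma> t u)"

lemma Ev_superset:
  assumes "finite T" "{t. f t \<noteq> 0} \<subseteq> T"
  shows "Ev \<sigma> f = (\<lambda>u. \<Sum>t\<in>T. f t * ev \<sigma> t u)"
  unfolding Ev_def by (rule ext, rule sum.mono_neutral_left) (use assms in auto)

lemma Ev_vadd:
  assumes "fin f" "fin g"
  shows "Ev \<sigma> (vadd f g) = vadd (Ev \<sigma> f) (Ev \<sigma> g)"
proof -
  let ?T = "{t. f t \<noteq> 0} \<union> {t. g t \<noteq> 0}"
  have fT: "finite ?T" using assms by (simp add: fin_def)
  have 1: "Ev \<sigma> (vadd f g) = (\<lambda>u. \<Sum>t\<in>?T. vadd f g t * ev \<sigma> t u)"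
    by (rule Ev_superset[OF fT]) (auto simp: vadd_def)
  have 2: "Ev \<sigma> f = (\<lambda>u. \<Sum>t\<in>?T. f t * ev \<sigma> t u)" by (rule Ev_superset[OF fT]) auto
  have 3: "Ev \<sigma> g = (\<lambda>u. \<Sum>t\<in>?T. g t * ev \<sigma> t u)" by (rule Ev_superset[OF fT]) auto
  show ?thesis unfolding 1 2 3 by (simp add: vadd_def distrib_right sum.distrib)
qed

lemma Ev_vsmult:
  assumes "fin f"
  shows "Ev \<sigma> (vsmult c f) = vsmult c (Ev \<sigma> f)"
proof -
  let ?T = "{t. f t \<noteq> 0}"
  have fT: "finite ?T" using assms by (simp add: fin_def)
  have 1: "Ev \<sigma> (vsmult c f) = (\<lambda>u. \<Sum>t\<in>?T. vsmult c f t * ev \<sigma> t u)"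
    by (rule Ev_superset[OF fT]) (auto simp: vsmult_def)
  have 2: "Ev \<sigma> f = (\<lambda>u. \<Sum>t\<in>?T. f t * ev \<sigma> t u)" by (simp add: Ev_def)
  show ?thesis unfolding 1 2 by (simp add: vsmult_def sum_distrib_left mult.assoc)
qed

lemma Ev_vzero[simp]: "Ev \<sigma> vzero = vzero"
  by (simp add: Ev_def vzero_def)

lemma Ev_vtree[simp]: "Ev \<sigma> (vtree t) = ev \<sigma> t"
proof -
  have "Ev \<sigma> (vtree t) = (\<lambda>u. \<Sum>s\<in>{t}. vtree t s * ev \<sigma> s u)"
    by (rule Ev_superset) (auto simp: vtree_def)
  then show ?thesis by (simp add: vtree_def)
qed

lemma Ev_vgen[simp]: "Ev \<sigma> (vgen x) = \<sigma> x"
  by (simp add: vgen_vtree)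

lemma FM_induct[consumes 1, case_names zero step]:
  assumes "f \<in> FM S" "P vzero"
    "\<And>c t g. leaves t \<subseteq> S \<Longrightarrow> g \<in> FM S \<Longrightarrow> P g \<Longrightarrow> P (vadd (vsmult c (vtree t)) g)"
  shows "P f"
proof -
  have "\<forall>f'. f' \<in> FM S \<longrightarrow> {t. f' t \<noteq> 0} \<subseteq> T \<longrightarrow> P f'" if "finite T" for T
    using that
  proof (induction T rule: finite_induct)
    case empty
    show ?case
    proof (intro allI impI)
      fix f :: "'a mtree \<Rightarrow> 'b" assume "{t. f t \<noteq> 0} \<subseteq> {}"
      then have "f = vzero" by (auto simp: vzero_def)
      then show "P f" using assms(2) by simp
    qed
  next
    case (insert t T)
    show ?case
    proof (intro allI impI)
      fix f :: "'a mtree \<Rightarrow> 'b" assume f: "f \<in> FM S" "{t. f t \<noteq> 0} \<subseteq> insert t T"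
      let ?g = "f(t := 0)"
      have gFM: "?g \<in> FM S" using f(1) unfolding FM_def
        by (auto intro: finite_subset[of _ "{t. f t \<noteq> 0}"])
      have "{s. ?g s \<noteq> 0} \<subseteq> T" using f(2) by auto
      then have Pg: "P ?g" using insert.IH gFM by blast
      show "P f"
      proof (cases "f t = 0")
        case True
        then have "?g = f" by auto
        then show ?thesis using Pg by simp
      next
        case False
        then have "leaves t \<subseteq> S" using f(1) by (auto simp: FM_def)
        moreover have "f = vadd (vsmult (f t) (vtree t)) ?g"
          by (auto simp: vadd_def vsmult_def vtree_def)
        ultimately show ?thesis using assms(3)[OF _ gFM Pg] by metis
      qed
    qed
  qed
  then show ?thesis using assms(1) by (auto simp: FM_def)
qed

lemma fin_simps[simp]: "fin f \<longleftrightarrow> f \<in> FM UNIV" by (simp add: fin_UNIV)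

lemma Ev_vbr_tree:
  assumes "g \<in> FM UNIV"
  shows "Ev \<sigma> (vbr (vtree s) g) = vbr (ev \<sigma> s) (Ev \<sigma> g)"
  using assms
proof (induction rule: FM_induct)
  case zero then show ?case by simp
next
  case (step c t g)
  have "vbr (vtree s) (vadd (vsmult c (vtree t)) g) = vadd (vsmult c (vtree (Node s t))) (vbr (vtree s) g)"
    by (simp add: vbr_vadd_right vbr_vsmult_right vbr_vtree)
  then show ?case using step
    by (simp add: Ev_vadd Ev_vsmult vbr_vadd_right vbr_vsmult_right)
qed

lemma Ev_vbr:
  assumes "f \<in> FM UNIV" "g \<in> FM UNIV"
  shows "Ev \<sigma> (vbr f g) = vbr (Ev \<sigma> f) (Ev \<sigma> g)"
  using assms(1)
proof (induction rule: FM_induct)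
  case zero then show ?case by simp
next
  case (step c t h)
  then show ?case using assms(2)
    by (simp add: Ev_vadd Ev_vsmult vbr_vadd_left vbr_vsmult_left Ev_vbr_tree)
qed

lemma Ev_vsub:
  assumes "f \<in> FM UNIV" "g \<in> FM UNIV"
  shows "Ev \<sigma> (vsub f g) = vsub (Ev \<sigma> f) (Ev \<sigma> g)"
  using assms by (simp add: vsub_eq Ev_vadd Ev_vsmult)

lemma ev_FM: "\<sigma> ` S \<subseteq> FM S' \<Longrightarrow> leaves t \<subseteq> S \<Longrightarrow> ev \<sigma> t \<in> FM S'"
  by (induction t) auto

lemma Ev_FM:
  assumes "\<sigma> ` S \<subseteq> FM S'" "f \<in> FM S"
  shows "Ev \<sigma> f \<in> FM S'"
  using assms(2)
proof (induction rule: FM_induct)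
  case zero then show ?case by simp
next
  case (step c t g)
  then have "vtree t \<in> FM UNIV" "g \<in> FM UNIV" by (auto intro: FM_mono)
  then show ?case using step ev_FM[OF assms(1) step(1)]
    by (simp add: Ev_vadd Ev_vsmult)
qed

lemma Ev_pideal:
  assumes RFM: "R \<subseteq> FM S" and sig: "\<sigma> ` S \<subseteq> FM S'"
    and rels: "\<forall>r\<in>R. Ev \<sigma> r \<in> pideal S' R'"
  shows "x \<in> pideal S R \<Longrightarrow> Ev \<sigma> x \<in> pideal S' R'"
proof (induction rule: pideal.induct)
  case (rel r) then show ?case using rels by blast
next
  case (alt a)
  then have "a \<in> FM UNIV" by (rule FM_mono)
  then show ?case using alt Ev_FM[OF sig alt] by (simp add: Ev_vbr pideal.alt)
next
  case (jac a b c)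
  have u: "a \<in> FM UNIV" "b \<in> FM UNIV" "c \<in> FM UNIV" using jac by (auto intro: FM_mono)
  have "Ev \<sigma> (jacobi a b c) = jacobi (Ev \<sigma> a) (Ev \<sigma> b) (Ev \<sigma> c)"
    using u by (simp add: jacobi_def Ev_vadd Ev_vbr)
  then show ?case using jac Ev_FM[OF sig] by (simp add: pideal.jac)
next
  case zero then show ?case by (simp add: pideal.zero)
next
  case (add x y)
  then have "x \<in> FM UNIV" "y \<in> FM UNIV" using pideal_FM[OF RFM] FM_mono by blast+
  then show ?case using add by (simp add: Ev_vadd pideal.add)
next
  case (smult x c)
  then have "x \<in> FM UNIV" using pideal_FM[OF RFM] FM_mono by blast+
  then show ?case using smult by (simp add: Ev_vsmult pideal.smult)
next
  case (left x a)
  then have "x \<in> FM UNIV" "a \<in> FM UNIV" using pideal_FM[OF RFM] FM_mono by blast+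
  then show ?case using left Ev_FM[OF sig] by (simp add: Ev_vbr pideal.left)
next
  case (right x a)
  then have "x \<in> FM UNIV" "a \<in> FM UNIV" using pideal_FM[OF RFM] FM_mono by blast+
  then show ?case using right Ev_FM[OF sig] by (simp add: Ev_vbr pideal.right)
qed

definition hom :: "('a \<Rightarrow> ('b,'k::field) fm) \<Rightarrow> 'b set \<Rightarrow> ('b,'k) fm set \<Rightarrow> ('a,'k) fm set \<Rightarrow> ('b,'k) fm set" where
  "hom \<sigma> S' R' A = pcls S' R' (Ev \<sigma> (prep A))"

lemma hom_pcls:
  assumes RFM: "R \<subseteq> FM S" and sig: "\<sigma> ` S \<subseteq> FM S'"
    and rels: "\<forall>r\<in>R. Ev \<sigma> r \<in> pideal S' R'" and f: "f \<in> FM S"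
  shows "hom \<sigma> S' R' (pcls S R f) = pcls S' R' (Ev \<sigma> f)"
proof -
  let ?p = "prep (pcls S R f)"
  have p: "?p \<in> FM S" "vsub ?p f \<in> pideal S R" using prep_pcls[OF f] by auto
  have "Ev \<sigma> (vsub ?p f) \<in> pideal S' R'" by (rule Ev_pideal[OF RFM sig rels p(2)])
  moreover have "Ev \<sigma> (vsub ?p f) = vsub (Ev \<sigma> ?p) (Ev \<sigma> f)"
    using p f by (simp add: Ev_vsub FM_mono)
  ultimately show ?thesis unfolding hom_def
    using Ev_FM[OF sig p(1)] Ev_FM[OF sig f] by (simp add: pcls_eq_iff)
qed

lemma Ev_comp_tree:
  assumes sig: "\<sigma> ` S \<subseteq> FM S'" and tau: "\<tau> ` S' \<subseteq> FM S"
    and gen: "\<forall>x\<in>S. vsub (Ev \<tau> (\<sigma> x)) (vgen x) \<in> pideal S R"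
  shows "leaves t \<subseteq> S \<Longrightarrow> vsub (Ev \<tau> (ev \<sigma> t)) (vtree t) \<in> pideal S R"
proof (induction t)
  case (Leaf x) then show ?case using gen by (simp add: vgen_vtree)
next
  case (Node s r)
  let ?A = "Ev \<tau> (ev \<sigma> s)" and ?B = "Ev \<tau> (ev \<sigma> r)"
  have ls: "leaves s \<subseteq> S" "leaves r \<subseteq> S" using Node by auto
  have FMs: "ev \<sigma> s \<in> FM UNIV" "ev \<sigma> r \<in> FM UNIV" using ev_FM[OF sig] ls FM_mono by blast+
  have B: "?B \<in> FM S" using Ev_FM[OF tau] ev_FM[OF sig] ls by blast
  have "vsub (Ev \<tau> (ev \<sigma> (Node s r))) (vtree (Node s r))
      = vadd (vbr (vsub ?A (vtree s)) ?B) (vbr (vtree s) (vsub ?B (vtree r)))"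
    using FMs by (simp add: Ev_vbr vbr_vtree[symmetric]) (rule ext, simp add: vsub_def vadd_def vbr_def algebra_simps split: mtree.split)
  also have "\<dots> \<in> pideal S R"
    using Node ls B FM_vtree[OF ls(1)] by (intro pideal.add pideal.left pideal.right) auto
  finally show ?case .
qed

lemma Ev_comp:
  assumes sig: "\<sigma> ` S \<subseteq> FM S'" and tau: "\<tau> ` S' \<subseteq> FM S"
    and gen: "\<forall>x\<in>S. vsub (Ev \<tau> (\<sigma> x)) (vgen x) \<in> pideal S R"
    and f: "f \<in> FM S"
  shows "vsub (Ev \<tau> (Ev \<sigma> f)) f \<in> pideal S R"
  using f
proof (induction rule: FM_induct)
  case zero then show ?case by (simp add: pideal.zero)
next
  case (step c t g)
  have u: "vtree t \<in> FM UNIV" "g \<in> FM UNIV" using step by (auto intro: FM_mono)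
  have e: "ev \<sigma> t \<in> FM S'" "Ev \<sigma> g \<in> FM S'" using ev_FM[OF sig step(1)] Ev_FM[OF sig step(2)] by auto
  have "Ev \<tau> (Ev \<sigma> (vadd (vsmult c (vtree t)) g)) = vadd (vsmult c (Ev \<tau> (ev \<sigma> t))) (Ev \<tau> (Ev \<sigma> g))"
    using u e by (simp add: Ev_vadd Ev_vsmult FM_mono)
  then have "vsub (Ev \<tau> (Ev \<sigma> (vadd (vsmult c (vtree t)) g))) (vadd (vsmult c (vtree t)) g)
     = vadd (vsmult c (vsub (Ev \<tau> (ev \<sigma> t)) (vtree t))) (vsub (Ev \<tau> (Ev \<sigma> g)) g)"
    by (auto simp: vsub_def vadd_def vsmult_def algebra_simps)
  also have "\<dots> \<in> pideal S R"
    using Ev_comp_tree[OF sig tau gen step(1)] step(3) by (intro pideal.add pideal.smult)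
  finally show ?case .
qed

lemma pcarrier_cases:
  assumes "A \<in> pcarrier S R" obtains f where "f \<in> FM S" "A = pcls S R f"
proof -
  from assms show thesis unfolding pcarrier_def using that by blast
qed

lemma iso_generic:
  assumes RFM: "R \<subseteq> FM S" and RFM': "R' \<subseteq> FM S'"
    and sig: "\<sigma> ` S \<subseteq> FM S'" and tau: "\<tau> ` S' \<subseteq> FM S"
    and rels: "\<forall>r\<in>R. Ev \<sigma> r \<in> pideal S' R'" and rels': "\<forall>r\<in>R'. Ev \<tau> r \<in> pideal S R"
    and gen: "\<forall>x\<in>S. vsub (Ev \<tau> (\<sigma> x)) (vgen x) \<in> pideal S R"
    and gen': "\<forall>x\<in>S'. vsub (Ev \<sigma> (\<tau> x)) (vgen x) \<in> pideal S' R'"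
  shows "plie_iso S R S' R' (hom \<sigma> S' R')"
proof -
  note H = hom_pcls[OF RFM sig rels] and H' = hom_pcls[OF RFM' tau rels']
  have img: "hom \<sigma> S' R' A \<in> pcarrier S' R'" if "A \<in> pcarrier S R" for A
    using that by (elim pcarrier_cases) (simp add: H pcarrier_def Ev_FM[OF sig])
  have img': "hom \<tau> S R B \<in> pcarrier S R" if "B \<in> pcarrier S' R'" for B
    using that by (elim pcarrier_cases) (simp add: H' pcarrier_def Ev_FM[OF tau])
  have inv1: "hom \<tau> S R (hom \<sigma> S' R' A) = A" if hA: "A \<in> pcarrier S R" for A
  proof -
    obtain f where f: "f \<in> FM S" "A = pcls S R f" using hA by (elim pcarrier_cases)
    show ?thesis using f Ev_comp[OF sig tau gen f(1)] Ev_FM[OF sig f(1)] Ev_FM[OF tau]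
      by (simp add: H H' pcls_eq_iff)
  qed
  have inv2: "hom \<sigma> S' R' (hom \<tau> S R B) = B" if hB: "B \<in> pcarrier S' R'" for B
  proof -
    obtain f where f: "f \<in> FM S'" "B = pcls S' R' f" using hB by (elim pcarrier_cases)
    show ?thesis using f Ev_comp[OF tau sig gen' f(1)] Ev_FM[OF tau f(1)] Ev_FM[OF sig]
      by (simp add: H H' pcls_eq_iff)
  qed
  have bij: "bij_betw (hom \<sigma> S' R') (pcarrier S R) (pcarrier S' R')"
    by (rule bij_betw_byWitness[where f' = "hom \<tau> S R"]) (use img img' inv1 inv2 in auto)
  have add: "hom \<sigma> S' R' (padd S R A B) = padd S' R' (hom \<sigma> S' R' A) (hom \<sigma> S' R' B)"
    if hAB: "A \<in> pcarrier S R" "B \<in> pcarrier S R" for A B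
  proof -
    obtain f g where "f \<in> FM S" "A = pcls S R f" "g \<in> FM S" "B = pcls S R g"
      using hAB by (metis pcarrier_cases)
    then show ?thesis using Ev_FM[OF sig]
      by (simp add: H padd_pcls Ev_vadd FM_mono)
  qed
  have sm: "hom \<sigma> S' R' (psmult S R c A) = psmult S' R' c (hom \<sigma> S' R' A)"
    if hA: "A \<in> pcarrier S R" for A c
  proof -
    obtain f where "f \<in> FM S" "A = pcls S R f"
      using hA by (metis pcarrier_cases)
    then show ?thesis using Ev_FM[OF sig]
      by (simp add: H psmult_pcls Ev_vsmult FM_mono)
  qed
  have br: "hom \<sigma> S' R' (pbr S R A B) = pbr S' R' (hom \<sigma> S' R' A) (hom \<sigma> S' R' B)"
    if hAB: "A \<in> pcarrier S R" "B \<in> pcarrier S R" for A B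
  proof -
    obtain f g where "f \<in> FM S" "A = pcls S R f" "g \<in> FM S" "B = pcls S R g"
      using hAB by (metis pcarrier_cases)
    then show ?thesis using Ev_FM[OF sig]
      by (simp add: H pbr_pcls Ev_vbr FM_mono)
  qed
  show ?thesis unfolding plie_iso_def using bij add sm br by blast
qed

section \<open>Abstract Lie algebras\<close>

locale lie_alg =
  fixes sc :: "'k::field \<Rightarrow> 'v::ab_group_add \<Rightarrow> 'v" and br :: "'v \<Rightarrow> 'v \<Rightarrow> 'v"
  assumes sc_add_left: "sc (s + t) x = sc s x + sc t x"
    and sc_add_right: "sc s (x + y) = sc s x + sc s y"
    and sc_sc: "sc s (sc t x) = sc (s * t) x"
    and sc_one: "sc 1 x = x"
    and br_add_left: "br (x + y) z = br x z + br y z"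
    and br_add_right: "br x (y + z) = br x y + br x z"
    and br_sc_left: "br (sc s x) y = sc s (br x y)"
    and br_sc_right: "br x (sc s y) = sc s (br x y)"
    and br_alt: "br x x = 0"
    and jacobi: "br x (br y z) + br y (br z x) + br z (br x y) = 0"
begin

lemma sc_zero_left[simp]: "sc 0 x = 0"
proof -
  have "sc 0 x + sc 0 x = sc 0 x + 0" using sc_add_left[of 0 0 x, symmetric] by simp
  then show ?thesis by (rule add_left_imp_eq)
qed

lemma sc_zero_right[simp]: "sc s 0 = 0"
proof -
  have "sc s 0 + sc s 0 = sc s 0 + 0" using sc_add_right[of s 0 0, symmetric] by simp
  then show ?thesis by (rule add_left_imp_eq)
qed

lemma sc_minus_right: "sc s (- x) = - sc s x"
proof -
  have "sc s x + sc s (- x) = sc s (x + - x)" by (rule sc_add_right[symmetric])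
  also have "\<dots> = 0" by simp
  finally show ?thesis by (rule minus_unique[symmetric])
qed

lemma sc_minus_left: "sc (- s) x = - sc s x"
proof -
  have "sc s x + sc (- s) x = sc (s + - s) x" by (rule sc_add_left[symmetric])
  also have "\<dots> = 0" by simp
  finally show ?thesis by (rule minus_unique[symmetric])
qed

lemma sc_diff_right: "sc s (x - y) = sc s x - sc s y"
  by (simp only: diff_conv_add_uminus sc_add_right sc_minus_right)

lemma sc_diff_left: "sc (s - t) x = sc s x - sc t x"
  by (simp only: diff_conv_add_uminus sc_add_left sc_minus_left)

lemma br_zero_left[simp]: "br 0 x = 0"
proof -
  have "br 0 x + br 0 x = br 0 x + 0" using br_add_left[of 0 0 x, symmetric] by simp
  then show ?thesis by (rule add_left_imp_eq)
qed

lemma br_zero_right[simp]: "br x 0 = 0"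
proof -
  have "br x 0 + br x 0 = br x 0 + 0" using br_add_right[of x 0 0, symmetric] by simp
  then show ?thesis by (rule add_left_imp_eq)
qed

lemma br_minus_left: "br (- x) y = - br x y"
proof -
  have "br x y + br (- x) y = br (x + - x) y" by (rule br_add_left[symmetric])
  also have "\<dots> = 0" by simp
  finally show ?thesis by (rule minus_unique[symmetric])
qed

lemma br_minus_right: "br y (- x) = - br y x"
proof -
  have "br y x + br y (- x) = br y (x + - x)" by (rule br_add_right[symmetric])
  also have "\<dots> = 0" by simp
  finally show ?thesis by (rule minus_unique[symmetric])
qed

lemma br_diff_left: "br (x - y) z = br x z - br y z"
  by (simp only: diff_conv_add_uminus br_add_left br_minus_left)

lemma br_diff_right: "br z (x - y) = br z x - br z y"
  by (simp only: diff_conv_add_uminus br_add_right br_minus_right)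

lemma br_anti: "br y x = - br x y"
proof -
  have "br x y + br y x = br x x + br x y + (br y x + br y y)" by (simp add: br_alt)
  also have "\<dots> = br (x + y) (x + y)" by (simp only: br_add_left br_add_right add_ac)
  also have "\<dots> = 0" by (rule br_alt)
  finally have "br x y + br y x = 0" .
  then show ?thesis by (rule minus_unique[symmetric])
qed

lemma jac: "br x (br y z) = br (br x y) z + br y (br x z)"
proof -
  have "br x (br y z) + br y (br z x) + br z (br x y) = 0" by (rule jacobi)
  moreover have "br z (br x y) = - br (br x y) z" by (rule br_anti)
  moreover have "br z x = - br x z" by (rule br_anti)
  ultimately have "br x (br y z) + - br y (br x z) + - br (br x y) z = 0" by (simp add: br_minus_right)
  then show ?thesis by (simp add: algebra_simps)
qed

lemmas lin = sc_add_left sc_add_right sc_sc sc_one br_add_left br_add_right br_sc_left br_sc_right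
  sc_minus_right sc_minus_left sc_diff_right sc_diff_left br_minus_left br_minus_right
  br_diff_left br_diff_right

end

locale pres =
  fixes S :: "'a set" and R :: "('a,'k::field) fm set"
    and Rep :: "'t \<Rightarrow> ('a,'k) fm set" and Abs :: "('a,'k) fm set \<Rightarrow> 't"
  assumes RFM: "R \<subseteq> FM S" and td: "type_definition Rep Abs (pcarrier S R)"
begin

definition emb :: "('a,'k) fm \<Rightarrow> 't" where "emb f = Abs (pcls S R f)"
definition qadd :: "'t \<Rightarrow> 't \<Rightarrow> 't" where "qadd x y = Abs (padd S R (Rep x) (Rep y))"
definition qsc :: "'k \<Rightarrow> 't \<Rightarrow> 't" where "qsc c x = Abs (psmult S R c (Rep x))"
definition qbr :: "'t \<Rightarrow> 't \<Rightarrow> 't" where "qbr x y = Abs (pbr S R (Rep x) (Rep y))"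

lemma Rep_emb: "f \<in> FM S \<Longrightarrow> Rep (emb f) = pcls S R f"
  unfolding emb_def by (rule type_definition.Abs_inverse[OF td]) (auto simp: pcarrier_def)

lemma emb_cases:
  obtains f where "f \<in> FM S" "x = emb f"
proof -
  have "Rep x \<in> pcarrier S R" by (rule type_definition.Rep[OF td])
  then obtain f where f: "f \<in> FM S" "Rep x = pcls S R f" by (auto simp: pcarrier_def)
  then have "x = emb f" unfolding emb_def using type_definition.Rep_inverse[OF td, of x] by simp
  then show thesis using f that by blast
qed

lemma emb_eq_iff: "f \<in> FM S \<Longrightarrow> g \<in> FM S \<Longrightarrow> emb f = emb g \<longleftrightarrow> vsub f g \<in> pideal S R"
  unfolding emb_def
  by (subst type_definition.Abs_inject[OF td]) (auto simp: pcarrier_def pcls_eq_iff)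

lemma emb_zero_iff: "f \<in> FM S \<Longrightarrow> emb f = emb vzero \<longleftrightarrow> f \<in> pideal S R"
  by (simp add: emb_eq_iff)

lemma qadd_emb: "f \<in> FM S \<Longrightarrow> g \<in> FM S \<Longrightarrow> qadd (emb f) (emb g) = emb (vadd f g)"
  by (simp add: qadd_def Rep_emb padd_pcls emb_def[symmetric])
lemma qsc_emb: "f \<in> FM S \<Longrightarrow> qsc c (emb f) = emb (vsmult c f)"
  by (simp add: qsc_def Rep_emb psmult_pcls emb_def[symmetric])
lemma qbr_emb: "f \<in> FM S \<Longrightarrow> g \<in> FM S \<Longrightarrow> qbr (emb f) (emb g) = emb (vbr f g)"
  by (simp add: qbr_def Rep_emb pbr_pcls emb_def[symmetric])

lemmas qemb = qadd_emb qsc_emb qbr_emb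

lemma qadd_assoc: "qadd (qadd x y) z = qadd x (qadd y z)"
  apply (cases x rule: emb_cases, cases y rule: emb_cases, cases z rule: emb_cases)
  apply (simp add: qemb)
  apply (rule arg_cong[where f = emb])
  by (rule ext) (simp add: vadd_def algebra_simps)

lemma qadd_comm: "qadd x y = qadd y x"
  apply (cases x rule: emb_cases, cases y rule: emb_cases)
  apply (simp add: qemb)
  apply (rule arg_cong[where f = emb])
  by (rule ext) (simp add: vadd_def algebra_simps)

lemma qadd_zero: "qadd (emb vzero) x = x"
  apply (cases x rule: emb_cases)
  apply (simp add: qemb)
  apply (rule arg_cong[where f = emb])
  by (rule ext) (simp add: vadd_def vzero_def)

lemma qadd_neg: "qadd (qsc (-1) x) x = emb vzero"
  apply (cases x rule: emb_cases)
  apply (simp add: qemb)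
  apply (rule arg_cong[where f = emb])
  by (rule ext) (simp add: vadd_def vzero_def vsmult_def)

lemma qsc_add_left: "qsc (s + t) x = qadd (qsc s x) (qsc t x)"
  apply (cases x rule: emb_cases)
  apply (simp add: qemb)
  apply (rule arg_cong[where f = emb])
  by (rule ext) (simp add: vadd_def vsmult_def algebra_simps)

lemma qsc_add_right: "qsc s (qadd x y) = qadd (qsc s x) (qsc s y)"
  apply (cases x rule: emb_cases, cases y rule: emb_cases)
  apply (simp add: qemb)
  apply (rule arg_cong[where f = emb])
  by (rule ext) (simp add: vadd_def vsmult_def algebra_simps)

lemma qsc_sc: "qsc s (qsc t x) = qsc (s * t) x"
  apply (cases x rule: emb_cases)
  apply (simp add: qemb)
  apply (rule arg_cong[where f = emb])
  by (rule ext) (simp add: vsmult_def algebra_simps)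

lemma qsc_one: "qsc 1 x = x"
  apply (cases x rule: emb_cases)
  apply (simp add: qemb)
  apply (rule arg_cong[where f = emb])
  by (rule ext) (simp add: vsmult_def algebra_simps)

lemma qbr_add_left: "qbr (qadd x y) z = qadd (qbr x z) (qbr y z)"
  apply (cases x rule: emb_cases, cases y rule: emb_cases, cases z rule: emb_cases)
  by (simp add: qemb vbr_vadd_left)

lemma qbr_add_right: "qbr x (qadd y z) = qadd (qbr x y) (qbr x z)"
  apply (cases x rule: emb_cases, cases y rule: emb_cases, cases z rule: emb_cases)
  by (simp add: qemb vbr_vadd_right)

lemma qbr_sc_left: "qbr (qsc s x) y = qsc s (qbr x y)"
  apply (cases x rule: emb_cases, cases y rule: emb_cases)
  by (simp add: qemb vbr_vsmult_left)

lemma qbr_sc_right: "qbr x (qsc s y) = qsc s (qbr x y)"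
  apply (cases x rule: emb_cases, cases y rule: emb_cases)
  by (simp add: qemb vbr_vsmult_right)

lemma qbr_alt: "qbr x x = emb vzero"
  apply (cases x rule: emb_cases)
  by (simp add: qemb emb_zero_iff pideal.alt)

lemma qjacobi: "qadd (qadd (qbr x (qbr y z)) (qbr y (qbr z x))) (qbr z (qbr x y)) = emb vzero"
proof -
  obtain f g h where "f \<in> FM S" "g \<in> FM S" "h \<in> FM S" "x = emb f" "y = emb g" "z = emb h"
    by (metis emb_cases)
  moreover have "vadd (vadd (vbr f (vbr g h)) (vbr g (vbr h f))) (vbr h (vbr f g)) = jacobi f g h"
    by (rule ext) (simp add: jacobi_def vadd_def)
  moreover have "jacobi f g h \<in> FM S" using calculation by (simp add: jacobi_def)
  moreover have "jacobi f g h \<in> pideal S R" using calculation by (simp add: pideal.jac)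
  ultimately show ?thesis by (simp add: qemb emb_zero_iff)
qed

end

lemma mod3_in_f_S[simp]: "(i::nat) mod 3 \<in> f_S"
proof -
  have "i mod 3 < 3" by simp
  then show ?thesis unfolding f_S_def by auto
qed

lemma FM_fz[simp]: "fz i \<in> FM f_S" by (simp add: fz_def)

lemma f_R_FM: "f_R \<subseteq> FM f_S"
  unfolding f_R_def by auto

lemma FM_tX[simp]: "i < 4 \<Longrightarrow> j < 4 \<Longrightarrow> i \<noteq> j \<Longrightarrow> tX i j \<in> FM tet_S"
  by (simp add: tX_def tet_S_def)

lemma tet_R_FM: "tet_R \<subseteq> FM tet_S"
  unfolding tet_R_def by auto

typedef (overloaded) 'k fq = "pcarrier f_S (f_R :: (nat,'k::field) fm set)"
proof
  show "pcls f_S (f_R :: (nat,'k::field) fm set) vzero \<in> pcarrier f_S f_R"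
    unfolding pcarrier_def by (rule imageI) simp
qed

typedef (overloaded) 'k tq = "pcarrier tet_S (tet_R :: (nat \<times> nat,'k::field) fm set)"
proof
  show "pcls tet_S (tet_R :: (nat \<times> nat,'k::field) fm set) vzero \<in> pcarrier tet_S tet_R"
    unfolding pcarrier_def by (rule imageI) simp
qed

interpretation Fp: pres f_S "f_R :: (nat,'k::field) fm set" Rep_fq Abs_fq
  by (rule pres.intro[OF f_R_FM type_definition_fq])

interpretation Tp: pres tet_S "tet_R :: (nat \<times> nat,'k::field) fm set" Rep_tq Abs_tq
  by (rule pres.intro[OF tet_R_FM type_definition_tq])

instantiation fq :: (field) ab_group_add
begin
definition zero_fq :: "'a fq" where "zero_fq = Fp.emb vzero"
definition plus_fq :: "'a fq \<Rightarrow> 'a fq \<Rightarrow> 'a fq" where "plus_fq = Fp.qadd"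
definition uminus_fq :: "'a fq \<Rightarrow> 'a fq" where "uminus_fq x = Fp.qsc (-1) x"
definition minus_fq :: "'a fq \<Rightarrow> 'a fq \<Rightarrow> 'a fq" where "minus_fq x y = Fp.qadd x (Fp.qsc (-1) y)"
instance
proof
  fix a b c :: "'a fq"
  show "a + b + c = a + (b + c)" unfolding plus_fq_def by (rule Fp.qadd_assoc)
  show "a + b = b + a" unfolding plus_fq_def by (rule Fp.qadd_comm)
  show "0 + a = a" unfolding plus_fq_def zero_fq_def by (rule Fp.qadd_zero)
  show "- a + a = 0" unfolding plus_fq_def zero_fq_def uminus_fq_def by (rule Fp.qadd_neg)
  show "a - b = a + - b" unfolding plus_fq_def minus_fq_def uminus_fq_def by (rule refl)
qed
end

instantiation tq :: (field) ab_group_add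
begin
definition zero_tq :: "'a tq" where "zero_tq = Tp.emb vzero"
definition plus_tq :: "'a tq \<Rightarrow> 'a tq \<Rightarrow> 'a tq" where "plus_tq = Tp.qadd"
definition uminus_tq :: "'a tq \<Rightarrow> 'a tq" where "uminus_tq x = Tp.qsc (-1) x"
definition minus_tq :: "'a tq \<Rightarrow> 'a tq \<Rightarrow> 'a tq" where "minus_tq x y = Tp.qadd x (Tp.qsc (-1) y)"
instance
proof
  fix a b c :: "'a tq"
  show "a + b + c = a + (b + c)" unfolding plus_tq_def by (rule Tp.qadd_assoc)
  show "a + b = b + a" unfolding plus_tq_def by (rule Tp.qadd_comm)
  show "0 + a = a" unfolding plus_tq_def zero_tq_def by (rule Tp.qadd_zero)
  show "- a + a = 0" unfolding plus_tq_def zero_tq_def uminus_tq_def by (rule Tp.qadd_neg)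
  show "a - b = a + - b" unfolding plus_tq_def minus_tq_def uminus_tq_def by (rule refl)
qed
end

interpretation F: lie_alg "Fp.qsc :: 'k::field \<Rightarrow> 'k fq \<Rightarrow> 'k fq" Fp.qbr
  by unfold_locales (simp_all add: zero_fq_def plus_fq_def Fp.qsc_add_left Fp.qsc_add_right Fp.qsc_sc
      Fp.qsc_one Fp.qbr_add_left Fp.qbr_add_right Fp.qbr_sc_left Fp.qbr_sc_right Fp.qbr_alt Fp.qjacobi)

interpretation T: lie_alg "Tp.qsc :: 'k::field \<Rightarrow> 'k tq \<Rightarrow> 'k tq" Tp.qbr
  by unfold_locales (simp_all add: zero_tq_def plus_tq_def Tp.qsc_add_left Tp.qsc_add_right Tp.qsc_sc
      Tp.qsc_one Tp.qbr_add_left Tp.qbr_add_right Tp.qbr_sc_left Tp.qbr_sc_right Tp.qbr_alt Tp.qjacobi)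

locale sixf = lie_alg sc br for sc :: "'k::field \<Rightarrow> 'v::ab_group_add \<Rightarrow> 'v" and br +
  fixes e0 e1 e2 e3 e4 e5 u0 u1 u2 :: 'v
  assumes t01: "br e0 e1 = e3"
  and t02: "br e0 e2 = - e5"
  and t03: "br e0 e3 = e1 + e5"
  and t04: "br e0 e4 = 0"
  and t05: "br e0 e5 = u0"
  and t12: "br e1 e2 = e4"
  and t13: "br e1 e3 = u1"
  and t14: "br e1 e4 = e2 + e3"
  and t15: "br e1 e5 = 0"
  and t23: "br e2 e3 = 0"
  and t24: "br e2 e4 = u2"
  and t25: "br e2 e5 = e0 + e4"
  and t34: "br e3 e4 = e1"
  and t35: "br e3 e5 = - e0"
  and t45: "br e4 e5 = e2"
begin

lemma r10: "br e1 e0 = - e3" by (simp add: br_anti[of e1 e0] t01)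
lemma r20: "br e2 e0 = e5" by (simp add: br_anti[of e2 e0] t02)
lemma r30: "br e3 e0 = - e1 - e5" by (simp add: br_anti[of e3 e0] t03)
lemma r40: "br e4 e0 = 0" by (simp add: br_anti[of e4 e0] t04)
lemma r50: "br e5 e0 = - u0" by (simp add: br_anti[of e5 e0] t05)
lemma r21: "br e2 e1 = - e4" by (simp add: br_anti[of e2 e1] t12)
lemma r31: "br e3 e1 = - u1" by (simp add: br_anti[of e3 e1] t13)
lemma r41: "br e4 e1 = - e2 - e3" by (simp add: br_anti[of e4 e1] t14)
lemma r51: "br e5 e1 = 0" by (simp add: br_anti[of e5 e1] t15)
lemma r32: "br e3 e2 = 0" by (simp add: br_anti[of e3 e2] t23)
lemma r42: "br e4 e2 = - u2" by (simp add: br_anti[of e4 e2] t24)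
lemma r52: "br e5 e2 = - e0 - e4" by (simp add: br_anti[of e5 e2] t25)
lemma r43: "br e4 e3 = - e1" by (simp add: br_anti[of e4 e3] t34)
lemma r53: "br e5 e3 = e0" by (simp add: br_anti[of e5 e3] t35)
lemma r54: "br e5 e4 = - e2" by (simp add: br_anti[of e5 e4] t45)

lemmas tab = t01 t02 t03 t04 t05 t12 t13 t14 t15 t23 t24 t25 t34 t35 t45 r10 r20 r30 r40 r50 r21 r31 r41 r51 r32 r42 r52 r43 r53 r54

definition L :: "'k \<Rightarrow> 'k \<Rightarrow> 'k \<Rightarrow> 'k \<Rightarrow> 'k \<Rightarrow> 'k \<Rightarrow> 'k \<Rightarrow> 'k \<Rightarrow> 'k \<Rightarrow> 'v" where
  "L c0 c1 c2 c3 c4 c5 c6 c7 c8 = sc c0 e0 + sc c1 e1 + sc c2 e2 + sc c3 e3 + sc c4 e4 + sc c5 e5 + sc c6 u0 + sc c7 u1 + sc c8 u2"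

lemma L_br: "br (L c0 c1 c2 c3 c4 c5 0 0 0) (L d0 d1 d2 d3 d4 d5 0 0 0) = L (c2 * d5 - c5 * d2 - (c3 * d5 - c5 * d3)) (c0 * d3 - c3 * d0 + (c3 * d4 - c4 * d3)) (c1 * d4 - c4 * d1 + (c4 * d5 - c5 * d4)) (c0 * d1 - c1 * d0 + (c1 * d4 - c4 * d1)) (c1 * d2 - c2 * d1 + (c2 * d5 - c5 * d2)) (c0 * d3 - c3 * d0 - (c0 * d2 - c2 * d0)) (c0 * d5 - c5 * d0) (c1 * d3 - c3 * d1) (c2 * d4 - c4 * d2)"
  unfolding L_def by (simp add: lin tab br_alt algebra_simps)

lemma L_add: "L c0 c1 c2 c3 c4 c5 c6 c7 c8 + L d0 d1 d2 d3 d4 d5 d6 d7 d8 = L (c0 + d0) (c1 + d1) (c2 + d2) (c3 + d3) (c4 + d4) (c5 + d5) (c6 + d6) (c7 + d7) (c8 + d8)"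
  unfolding L_def by (simp add: sc_add_left algebra_simps)

lemma L_diff: "L c0 c1 c2 c3 c4 c5 c6 c7 c8 - L d0 d1 d2 d3 d4 d5 d6 d7 d8 = L (c0 - d0) (c1 - d1) (c2 - d2) (c3 - d3) (c4 - d4) (c5 - d5) (c6 - d6) (c7 - d7) (c8 - d8)"
  unfolding L_def by (simp add: sc_diff_left algebra_simps)

lemma L_neg: "- L c0 c1 c2 c3 c4 c5 c6 c7 c8 = L (- c0) (- c1) (- c2) (- c3) (- c4) (- c5) (- c6) (- c7) (- c8)"
  unfolding L_def by (simp add: sc_minus_left algebra_simps)

lemma L_sc: "sc t (L c0 c1 c2 c3 c4 c5 c6 c7 c8) = L (t * c0) (t * c1) (t * c2) (t * c3) (t * c4) (t * c5) (t * c6) (t * c7) (t * c8)"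
  unfolding L_def by (simp add: sc_add_right sc_sc)

lemma L_cong: "c0 = d0 \<Longrightarrow> c1 = d1 \<Longrightarrow> c2 = d2 \<Longrightarrow> c3 = d3 \<Longrightarrow> c4 = d4 \<Longrightarrow> c5 = d5 \<Longrightarrow> c6 = d6 \<Longrightarrow> c7 = d7 \<Longrightarrow> c8 = d8 \<Longrightarrow> L c0 c1 c2 c3 c4 c5 c6 c7 c8 = L d0 d1 d2 d3 d4 d5 d6 d7 d8" by simp

lemma L_zero: "L 0 0 0 0 0 0 0 0 0 = 0" unfolding L_def by simp

lemma L_e0: "e0 = L 1 0 0 0 0 0 0 0 0" unfolding L_def by (simp add: sc_one)
lemma L_e1: "e1 = L 0 1 0 0 0 0 0 0 0" unfolding L_def by (simp add: sc_one)
lemma L_e2: "e2 = L 0 0 1 0 0 0 0 0 0" unfolding L_def by (simp add: sc_one)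
lemma L_e3: "e3 = L 0 0 0 1 0 0 0 0 0" unfolding L_def by (simp add: sc_one)
lemma L_e4: "e4 = L 0 0 0 0 1 0 0 0 0" unfolding L_def by (simp add: sc_one)
lemma L_e5: "e5 = L 0 0 0 0 0 1 0 0 0" unfolding L_def by (simp add: sc_one)

lemmas Lsimps = L_br L_add L_diff L_neg L_sc

end

locale sixt = lie_alg sc br for sc :: "'k::field \<Rightarrow> 'v::ab_group_add \<Rightarrow> 'v" and br +
  fixes e0 e1 e2 e3 e4 e5 u0 u1 u2 :: 'v
  assumes t01: "br e0 e1 = u0"
  and t02: "br e0 e2 = sc 2 e0 - sc 2 e2"
  and t03: "br e0 e3 = sc 2 e3 - sc 2 e0"
  and t04: "br e0 e4 = sc 2 e0 - sc 2 e4"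
  and t05: "br e0 e5 = sc 2 e0 + sc 2 e5"
  and t12: "br e1 e2 = - sc 2 e1 - sc 2 e2"
  and t13: "br e1 e3 = sc 2 e1 + sc 2 e3"
  and t14: "br e1 e4 = sc 2 e4 - sc 2 e1"
  and t15: "br e1 e5 = - sc 2 e1 - sc 2 e5"
  and t23: "br e2 e3 = u1"
  and t24: "br e2 e4 = sc 2 e2 - sc 2 e4"
  and t25: "br e2 e5 = sc 2 e5 - sc 2 e2"
  and t34: "br e3 e4 = - sc 2 e3 - sc 2 e4"
  and t35: "br e3 e5 = sc 2 e3 + sc 2 e5"
  and t45: "br e4 e5 = u2"
begin

lemma r10: "br e1 e0 = - (u0)" by (simp add: br_anti[of e1 e0] t01)
lemma r20: "br e2 e0 = - (sc 2 e0 - sc 2 e2)" by (simp add: br_anti[of e2 e0] t02)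
lemma r30: "br e3 e0 = - (sc 2 e3 - sc 2 e0)" by (simp add: br_anti[of e3 e0] t03)
lemma r40: "br e4 e0 = - (sc 2 e0 - sc 2 e4)" by (simp add: br_anti[of e4 e0] t04)
lemma r50: "br e5 e0 = - (sc 2 e0 + sc 2 e5)" by (simp add: br_anti[of e5 e0] t05)
lemma r21: "br e2 e1 = - (- sc 2 e1 - sc 2 e2)" by (simp add: br_anti[of e2 e1] t12)
lemma r31: "br e3 e1 = - (sc 2 e1 + sc 2 e3)" by (simp add: br_anti[of e3 e1] t13)
lemma r41: "br e4 e1 = - (sc 2 e4 - sc 2 e1)" by (simp add: br_anti[of e4 e1] t14)
lemma r51: "br e5 e1 = - (- sc 2 e1 - sc 2 e5)" by (simp add: br_anti[of e5 e1] t15)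
lemma r32: "br e3 e2 = - (u1)" by (simp add: br_anti[of e3 e2] t23)
lemma r42: "br e4 e2 = - (sc 2 e2 - sc 2 e4)" by (simp add: br_anti[of e4 e2] t24)
lemma r52: "br e5 e2 = - (sc 2 e5 - sc 2 e2)" by (simp add: br_anti[of e5 e2] t25)
lemma r43: "br e4 e3 = - (- sc 2 e3 - sc 2 e4)" by (simp add: br_anti[of e4 e3] t34)
lemma r53: "br e5 e3 = - (sc 2 e3 + sc 2 e5)" by (simp add: br_anti[of e5 e3] t35)
lemma r54: "br e5 e4 = - (u2)" by (simp add: br_anti[of e5 e4] t45)

lemmas tab = t01 t02 t03 t04 t05 t12 t13 t14 t15 t23 t24 t25 t34 t35 t45 r10 r20 r30 r40 r50 r21 r31 r41 r51 r32 r42 r52 r43 r53 r54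

definition L :: "'k \<Rightarrow> 'k \<Rightarrow> 'k \<Rightarrow> 'k \<Rightarrow> 'k \<Rightarrow> 'k \<Rightarrow> 'k \<Rightarrow> 'k \<Rightarrow> 'k \<Rightarrow> 'v" where
  "L c0 c1 c2 c3 c4 c5 c6 c7 c8 = sc c0 e0 + sc c1 e1 + sc c2 e2 + sc c3 e3 + sc c4 e4 + sc c5 e5 + sc c6 u0 + sc c7 u1 + sc c8 u2"

lemma L_br: "br (L c0 c1 c2 c3 c4 c5 0 0 0) (L d0 d1 d2 d3 d4 d5 0 0 0) = L (2 * ((c0 * d2 - c2 * d0) - (c0 * d3 - c3 * d0) + (c0 * d4 - c4 * d0) + (c0 * d5 - c5 * d0))) (2 * (- (c1 * d2 - c2 * d1) + (c1 * d3 - c3 * d1) - (c1 * d4 - c4 * d1) - (c1 * d5 - c5 * d1))) (2 * (- (c0 * d2 - c2 * d0) - (c1 * d2 - c2 * d1) + (c2 * d4 - c4 * d2) - (c2 * d5 - c5 * d2))) (2 * ((c0 * d3 - c3 * d0) + (c1 * d3 - c3 * d1) - (c3 * d4 - c4 * d3) + (c3 * d5 - c5 * d3))) (2 * (- (c0 * d4 - c4 * d0) + (c1 * d4 - c4 * d1) - (c2 * d4 - c4 * d2) - (c3 * d4 - c4 * d3))) (2 * ((c0 * d5 - c5 * d0) - (c1 * d5 - c5 * d1) + (c2 * d5 - c5 * d2) + (c3 * d5 - c5 * d3))) (c0 * d1 - c1 * d0) (c2 * d3 - c3 * d2) (c4 * d5 - c5 * d4)"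
  unfolding L_def by (simp add: lin tab br_alt algebra_simps)

lemma L_add: "L c0 c1 c2 c3 c4 c5 c6 c7 c8 + L d0 d1 d2 d3 d4 d5 d6 d7 d8 = L (c0 + d0) (c1 + d1) (c2 + d2) (c3 + d3) (c4 + d4) (c5 + d5) (c6 + d6) (c7 + d7) (c8 + d8)"
  unfolding L_def by (simp add: sc_add_left algebra_simps)

lemma L_diff: "L c0 c1 c2 c3 c4 c5 c6 c7 c8 - L d0 d1 d2 d3 d4 d5 d6 d7 d8 = L (c0 - d0) (c1 - d1) (c2 - d2) (c3 - d3) (c4 - d4) (c5 - d5) (c6 - d6) (c7 - d7) (c8 - d8)"
  unfolding L_def by (simp add: sc_diff_left algebra_simps)

lemma L_neg: "- L c0 c1 c2 c3 c4 c5 c6 c7 c8 = L (- c0) (- c1) (- c2) (- c3) (- c4) (- c5) (- c6) (- c7) (- c8)"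
  unfolding L_def by (simp add: sc_minus_left algebra_simps)

lemma L_sc: "sc t (L c0 c1 c2 c3 c4 c5 c6 c7 c8) = L (t * c0) (t * c1) (t * c2) (t * c3) (t * c4) (t * c5) (t * c6) (t * c7) (t * c8)"
  unfolding L_def by (simp add: sc_add_right sc_sc)

lemma L_cong: "c0 = d0 \<Longrightarrow> c1 = d1 \<Longrightarrow> c2 = d2 \<Longrightarrow> c3 = d3 \<Longrightarrow> c4 = d4 \<Longrightarrow> c5 = d5 \<Longrightarrow> c6 = d6 \<Longrightarrow> c7 = d7 \<Longrightarrow> c8 = d8 \<Longrightarrow> L c0 c1 c2 c3 c4 c5 c6 c7 c8 = L d0 d1 d2 d3 d4 d5 d6 d7 d8" by simp

lemma L_zero: "L 0 0 0 0 0 0 0 0 0 = 0" unfolding L_def by simp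

lemma L_e0: "e0 = L 1 0 0 0 0 0 0 0 0" unfolding L_def by (simp add: sc_one)
lemma L_e1: "e1 = L 0 1 0 0 0 0 0 0 0" unfolding L_def by (simp add: sc_one)
lemma L_e2: "e2 = L 0 0 1 0 0 0 0 0 0" unfolding L_def by (simp add: sc_one)
lemma L_e3: "e3 = L 0 0 0 1 0 0 0 0 0" unfolding L_def by (simp add: sc_one)
lemma L_e4: "e4 = L 0 0 0 0 1 0 0 0 0" unfolding L_def by (simp add: sc_one)
lemma L_e5: "e5 = L 0 0 0 0 0 1 0 0 0" unfolding L_def by (simp add: sc_one)

lemmas Lsimps = L_br L_add L_diff L_neg L_sc

end

context lie_alg
begin

definition DG :: "'v \<Rightarrow> 'v \<Rightarrow> bool" where
  "DG A B \<longleftrightarrow> br A (br A (br A B)) = sc 4 (br A B)"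

lemma DG_neg1[simp]: "DG (- A) B \<longleftrightarrow> DG A B"
  unfolding DG_def by (simp add: br_minus_left br_minus_right sc_minus_right)

lemma DG_neg2[simp]: "DG A (- B) \<longleftrightarrow> DG A B"
  unfolding DG_def by (simp add: br_minus_left br_minus_right sc_minus_right)

lemma sc_two: "sc 2 x = x + x"
proof -
  have "sc (1 + 1) x = sc 1 x + sc 1 x" by (rule sc_add_left)
  then show ?thesis by (simp only: one_add_one sc_one)
qed

end

definition tab6 :: "('b \<Rightarrow> 'b) \<Rightarrow> 'b \<Rightarrow> 'b \<Rightarrow> 'b \<Rightarrow> 'b \<Rightarrow> 'b \<Rightarrow> 'b \<Rightarrow> 'b \<Rightarrow> nat \<Rightarrow> nat \<Rightarrow> 'b" where
  "tab6 ng d A01 A23 A02 A31 A03 A12 i j =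
    (if i = 0 \<and> j = 1 then A01 else if i = 1 \<and> j = 0 then ng A01
     else if i = 2 \<and> j = 3 then A23 else if i = 3 \<and> j = 2 then ng A23
     else if i = 0 \<and> j = 2 then A02 else if i = 2 \<and> j = 0 then ng A02
     else if i = 3 \<and> j = 1 then A31 else if i = 1 \<and> j = 3 then ng A31
     else if i = 0 \<and> j = 3 then A03 else if i = 3 \<and> j = 0 then ng A03
     else if i = 1 \<and> j = 2 then A12 else if i = 2 \<and> j = 1 then ng A12 else d)"

lemma less4_cases: "(n::nat) < 4 \<Longrightarrow> n = 0 \<or> n = 1 \<or> n = 2 \<or> n = 3" by auto

lemma tab6_anti:
  fixes A01 :: "'b::ab_group_add"
  assumes "i < 4" "j < 4" "i \<noteq> j"
  shows "tab6 uminus 0 A01 A23 A02 A31 A03 A12 j i = - tab6 uminus 0 A01 A23 A02 A31 A03 A12 i j"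
  using less4_cases[OF assms(1)] less4_cases[OF assms(2)] assms(3)
  by (elim disjE) (simp_all add: tab6_def)

lemma (in lie_alg) tab6_cubic:
  assumes "DG A01 A23" "DG A23 A01" "DG A02 A31" "DG A31 A02" "DG A03 A12" "DG A12 A03"
    and "h < 4" "i < 4" "j < 4" "k < 4"
    and "h \<noteq> i" "h \<noteq> j" "h \<noteq> k" "i \<noteq> j" "i \<noteq> k" "j \<noteq> k"
  shows "DG (tab6 uminus 0 A01 A23 A02 A31 A03 A12 h i) (tab6 uminus 0 A01 A23 A02 A31 A03 A12 j k)"
  using less4_cases[OF assms(7)] less4_cases[OF assms(8)] less4_cases[OF assms(9)] less4_cases[OF assms(10)]
    assms(11-16)
  by (elim disjE) (simp_all add: tab6_def assms(1-6))

context sixf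
begin

definition fimg :: "nat \<Rightarrow> nat \<Rightarrow> 'v" where
  "fimg = tab6 uminus 0 (L 0 2 0 (-2) 0 0 0 0 0) (L 0 2 0 2 0 0 0 0 0) (L 0 0 2 0 (-2) 0 0 0 0)
     (L 0 0 2 0 2 0 0 0 0) (L 2 0 0 0 0 (-2) 0 0 0) (L 2 0 0 0 0 2 0 0 0)"

lemma fimg_quad:
  assumes "i < 4" "j < 4" "k < 4" "i \<noteq> j" "j \<noteq> k" "i \<noteq> k"
  shows "br (fimg i j) (fimg j k) = sc 2 (fimg i j + fimg j k)"
  using less4_cases[OF assms(1)] less4_cases[OF assms(2)] less4_cases[OF assms(3)] assms(4-6)
  by (elim disjE; simp only:; simp add: fimg_def tab6_def Lsimps)

end

locale frel = lie_alg sc br for sc :: "'k::field \<Rightarrow> 'v::ab_group_add \<Rightarrow> 'v" and br +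
  fixes z :: "nat \<Rightarrow> 'v"
  assumes zper: "z (i + 3) = z i"
    and R1: "br (br (z i) (z (i+1))) (z (i+2)) = 0"
    and R2: "br (z i) (br (z i) (z (i+1))) = z (i+1) + br (z (i+2)) (z i)"
    and R3: "br (br (z (i+1)) (br (z (i+1)) (br (z (i+1)) (z i)))) (br (z (i+1)) (z i)) = 0"
begin

lemma zi: "z (Suc (Suc (Suc i))) = z i"
  using zper[of i] by (simp add: numeral_3_eq_3)

lemma frame_basic:
  "br (br (z i) (z (i+1))) (z (i+2)) = 0"
  "br (br (z (i+1)) (z (i+2))) (z i) = 0"
  "br (br (z (i+2)) (z i)) (z (i+1)) = 0"
  "br (z i) (br (z i) (z (i+1))) = z (i+1) + br (z (i+2)) (z i)"
  "br (z (i+1)) (br (z (i+1)) (z (i+2))) = z (i+2) + br (z i) (z (i+1))"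
  "br (z (i+2)) (br (z (i+2)) (z i)) = z i + br (z (i+1)) (z (i+2))"
  using R1[of i] R1[of "i+1"] R1[of "i+2"] R2[of i] R2[of "i+1"] R2[of "i+2"] by (simp_all add: zi)

lemma wc: "br (br (z i) (z (i+1))) (br (z (i+2)) (z i)) = - z i"
proof -
  define x a y where "x = z i" and "a = z (i+1)" and "y = z (i+2)"
  have wy: "br (br x a) y = 0" and xw: "br x (br x a) = a + br y x" and yc: "br y (br y x) = x + br a y"
    using frame_basic[of i] by (simp_all add: x_def a_def y_def)
  have "br (br x a) (br y x) = br (br (br x a) y) x + br y (br (br x a) x)" by (rule jac)
  also have "\<dots> = br y (- (a + br y x))" using wy xw by (simp add: br_anti[of "br x a" x])
  also have "\<dots> = - x" using yc by (simp add: br_minus_right br_add_right br_diff_right br_anti[of y a])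
  finally show ?thesis by (simp add: x_def a_def y_def)
qed

lemma DGf:
  "DG (sc 2 (z (i+1) - br (z i) (z (i+1)))) (sc 2 (z (i+1) + br (z i) (z (i+1))))"
  "DG (sc 2 (z (i+1) + br (z i) (z (i+1)))) (sc 2 (z (i+1) - br (z i) (z (i+1))))"
proof -
  define x a y where "x = z i" and "a = z (i+1)" and "y = z (i+2)"
  define w c where "w = br x a" and "c = br y x"
  have wy: "br w y = 0" and ca: "br c a = 0" and xw: "br x w = a + c"
    using frame_basic[of i] by (simp_all add: x_def a_def y_def w_def c_def)
  have wc': "br w c = - x" using wc[of i] by (simp add: x_def a_def y_def w_def c_def)
  define u where "u = br a w"
  have ac: "br a c = 0" using ca by (simp add: br_anti[of a c])
  have xu: "br x u = 0"
  proof -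
    have "br x u = br (br x a) w + br a (br x w)" unfolding u_def by (rule jac)
    also have "\<dots> = 0" using xw ac by (simp add: w_def[symmetric] br_alt br_add_right)
    finally show ?thesis .
  qed
  have cu: "br c u = - w"
  proof -
    have "br c u = br (br c a) w + br a (br c w)" unfolding u_def by (rule jac)
    also have "\<dots> = - w"
    proof -
      have cw: "br c w = x" using wc' by (simp add: br_anti[of c w])
      show ?thesis using ca by (simp add: cw br_anti[of a x] w_def[symmetric])
    qed
    finally show ?thesis .
  qed
  have r3: "br w (br a u) = 0"
  proof -
    have "br (br a (br a (br a x))) (br a x) = 0" using R3[of i] by (simp add: x_def a_def)
    moreover have "br a x = - w" by (simp add: w_def br_anti[of a x])
    ultimately have "br (br a u) w = 0" by (simp add: u_def br_minus_left br_minus_right)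
    then show ?thesis by (simp add: br_anti[of w "br a u"])
  qed
  have key: "br a (br a u) + br w (br w u) = u"
  proof -
    have "0 = br x (br w (br a u))" using r3 by simp
    also have "\<dots> = br (br x w) (br a u) + br w (br x (br a u))" by (rule jac)
    also have "br x (br a u) = br (br x a) u + br a (br x u)" by (rule jac)
    also have "\<dots> = br w u" using xu by (simp add: w_def)
    also have "br (br x w) (br a u) = br a (br a u) + br c (br a u)" using xw by (simp add: br_add_left)
    also have "br c (br a u) = br (br c a) u + br a (br c u)" by (rule jac)
    also have "\<dots> = - u" using ca cu by (simp add: br_minus_right u_def)
    finally have "0 = br a (br a u) + - u + br w (br w u)" .
    then show ?thesis by (simp add: algebra_simps eq_neg_iff_add_eq_0)
  qed
  have aw: "br a (br w u) = 0"
  proof -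
    have "br a (br w u) = br (br a w) u + br w (br a u)" by (rule jac)
    then show ?thesis using r3 by (simp add: u_def[symmetric] br_alt)
  qed
  have key': "br w (br w u) = u - br a (br a u)" using key by (simp add: algebra_simps)
  have wa: "br w a = - u" by (simp add: u_def br_anti[of w a])
  have PQ: "br (a - w) (a + w) = u + u" and QP: "br (a + w) (a - w) = - (u + u)"
    using wa by (simp_all add: br_add_left br_add_right br_diff_left br_diff_right br_alt u_def[symmetric])
  have P2: "br (a - w) (br (a - w) (a + w)) = br a u + br a u - (br w u + br w u)"
    unfolding PQ by (simp add: br_add_right br_diff_left u_def[symmetric])
  have P3: "br (a - w) (br (a - w) (br (a - w) (a + w))) = u + u"
    unfolding P2 by (simp add: br_add_right br_diff_right br_diff_left br_add_left br_minus_right key' aw r3; simp add: algebra_simps)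
  have Q2: "br (a + w) (br (a + w) (a - w)) = - (br a u + br a u + (br w u + br w u))"
    unfolding QP by (simp add: br_add_right br_add_left br_minus_right br_diff_right u_def[symmetric])
  have Q3: "br (a + w) (br (a + w) (br (a + w) (a - w))) = - (u + u)"
    unfolding Q2 by (simp add: br_add_right br_diff_right br_diff_left br_add_left br_minus_right key' aw r3; simp add: algebra_simps)
  have "br (sc 2 (a - w)) (br (sc 2 (a - w)) (br (sc 2 (a - w)) (sc 2 (a + w))))
      = sc 16 (br (a - w) (br (a - w) (br (a - w) (a + w))))"
    by (simp add: br_sc_left br_sc_right sc_sc)
  also have "\<dots> = sc 4 (sc 4 (u + u))" using P3 by (simp add: sc_sc)
  also have "\<dots> = sc 4 (br (sc 2 (a - w)) (sc 2 (a + w)))" using PQ by (simp add: br_sc_left br_sc_right sc_sc)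
  finally show "DG (sc 2 (z (i+1) - br (z i) (z (i+1)))) (sc 2 (z (i+1) + br (z i) (z (i+1))))"
    unfolding DG_def by (simp add: a_def w_def x_def)
  have "br (sc 2 (a + w)) (br (sc 2 (a + w)) (br (sc 2 (a + w)) (sc 2 (a - w))))
      = sc 16 (br (a + w) (br (a + w) (br (a + w) (a - w))))"
    by (simp add: br_sc_left br_sc_right sc_sc)
  also have "\<dots> = sc 4 (sc 4 (- (u + u)))" using Q3 by (simp add: sc_sc)
  also have "\<dots> = sc 4 (br (sc 2 (a + w)) (sc 2 (a - w)))" using QP by (simp add: br_sc_left br_sc_right sc_sc)
  finally show "DG (sc 2 (z (i+1) + br (z i) (z (i+1)))) (sc 2 (z (i+1) - br (z i) (z (i+1))))"
    unfolding DG_def by (simp add: a_def w_def x_def)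
qed

end

context lie_alg
begin

lemma DG_core:
  assumes "DG P Q" "DG Q P"
  shows "br (br (P + Q) (br P Q)) (P - Q) = 0"
proof -
  define R where "R = br P Q"
  have f1: "br (br P R) P = - sc 4 R"
    using assms(1) unfolding DG_def R_def by (simp add: br_anti[of "br P (br P Q)" P])
  have QR: "br Q R = - br Q (br Q P)" unfolding R_def by (simp add: br_anti[of P Q] br_minus_right)
  have f2: "br (br Q R) Q = - sc 4 R"
  proof -
    have "br (br Q R) Q = - br Q (br Q R)" by (rule br_anti)
    also have "\<dots> = br Q (br Q (br Q P))" unfolding QR by (simp add: br_minus_right)
    also have "\<dots> = sc 4 (br Q P)" using assms(2) unfolding DG_def by simp
    also have "\<dots> = - sc 4 R" unfolding R_def by (simp add: br_anti[of Q P] sc_minus_right)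
    finally show ?thesis .
  qed
  have f3: "br (br Q R) P = br (br P R) Q"
  proof -
    have j: "br P (br Q R) = br (br P Q) R + br Q (br P R)" by (rule jac)
    have "br (br Q R) P = - br P (br Q R)" by (rule br_anti)
    also have "\<dots> = - br Q (br P R)" using j by (simp add: R_def[symmetric] br_alt)
    also have "\<dots> = br (br P R) Q" by (simp add: br_anti[of "br P R" Q])
    finally show ?thesis .
  qed
  have "br (br (P + Q) R) (P - Q) = br (br P R) P - br (br P R) Q + (br (br Q R) P - br (br Q R) Q)"
    by (simp add: br_add_left br_diff_right)
  also have "\<dots> = 0" unfolding f1 f2 f3 by simp
  finally show ?thesis unfolding R_def .
qed

lemma R3_gen:
  assumes A: "A = sc s (P + Q)" and v: "br A B = sc t (P - Q)" and "DG P Q" "DG Q P"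
  shows "br (br A (br A (br A B))) (br A B) = 0"
proof -
  define X where "X = br (P + Q) (br P Q)"
  have PQm: "br (P + Q) (P - Q) = - (br P Q + br P Q)"
    by (simp add: br_add_left br_diff_right br_alt br_anti[of Q P])
  have s1: "br A (br A B) = sc (s * t) (- (br P Q + br P Q))"
    unfolding v unfolding A by (simp only: br_sc_left br_sc_right sc_sc PQm mult_ac)
  have s2: "br A (br A (br A B)) = sc (s * (s * t)) (- (X + X))"
    unfolding s1 unfolding A X_def by (simp only: br_sc_left br_sc_right sc_sc br_minus_right br_add_right mult_ac
        sc_add_right[symmetric] sc_minus_right[symmetric])
  have c: "br X (P - Q) = 0" unfolding X_def by (rule DG_core[OF assms(3,4)])
  show ?thesis unfolding s2 unfolding v
    by (simp only: br_sc_left br_sc_right br_minus_left br_add_left c add_0 minus_zero sc_zero_right)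
qed

end

context sixt
begin

lemma t_R1_1:
  assumes q: "4 * q = 1"
  shows "br (br (L 0 0 q q 0 0 0 0 0) (L 0 0 0 0 q q 0 0 0)) (L q q 0 0 0 0 0 0 0) = L 0 0 0 0 0 0 0 0 0"
  using q apply (simp add: Lsimps)
  apply (rule L_cong; ((simp; fail) | algebra))?
  done

lemma t_R1_2:
  assumes q: "4 * q = 1"
  shows "br (br (L 0 0 0 0 q q 0 0 0) (L q q 0 0 0 0 0 0 0)) (L 0 0 q q 0 0 0 0 0) = L 0 0 0 0 0 0 0 0 0"
  using q apply (simp add: Lsimps)
  apply (rule L_cong; ((simp; fail) | algebra))?
  done

lemma t_R1_3:
  assumes q: "4 * q = 1"
  shows "br (br (L q q 0 0 0 0 0 0 0) (L 0 0 q q 0 0 0 0 0)) (L 0 0 0 0 q q 0 0 0) = L 0 0 0 0 0 0 0 0 0"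
  using q apply (simp add: Lsimps)
  apply (rule L_cong; ((simp; fail) | algebra))?
  done

lemmas t_R1 = t_R1_1 t_R1_2 t_R1_3

lemma t_R2_1:
  assumes q: "4 * q = 1"
  shows "br (L 0 0 q q 0 0 0 0 0) (br (L 0 0 q q 0 0 0 0 0) (L 0 0 0 0 q q 0 0 0)) =
          L 0 0 0 0 q q 0 0 0 + br (L q q 0 0 0 0 0 0 0) (L 0 0 q q 0 0 0 0 0)"
  using q apply (simp add: Lsimps)
  apply (rule L_cong; ((simp; fail) | algebra))?
  done

lemma t_R2_2:
  assumes q: "4 * q = 1"
  shows "br (L 0 0 0 0 q q 0 0 0) (br (L 0 0 0 0 q q 0 0 0) (L q q 0 0 0 0 0 0 0)) =
          L q q 0 0 0 0 0 0 0 + br (L 0 0 q q 0 0 0 0 0) (L 0 0 0 0 q q 0 0 0)"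
  using q apply (simp add: Lsimps)
  apply (rule L_cong; ((simp; fail) | algebra))?
  done

lemma t_R2_3:
  assumes q: "4 * q = 1"
  shows "br (L q q 0 0 0 0 0 0 0) (br (L q q 0 0 0 0 0 0 0) (L 0 0 q q 0 0 0 0 0)) =
          L 0 0 q q 0 0 0 0 0 + br (L 0 0 0 0 q q 0 0 0) (L q q 0 0 0 0 0 0 0)"
  using q apply (simp add: Lsimps)
  apply (rule L_cong; ((simp; fail) | algebra))?
  done

lemmas t_R2 = t_R2_1 t_R2_2 t_R2_3

lemma t_brs:
  assumes q: "4 * q = 1"
  shows "br (L 0 0 0 0 q q 0 0 0) (L 0 0 q q 0 0 0 0 0) = sc q (e4 - e5)"
    "br (L q q 0 0 0 0 0 0 0) (L 0 0 0 0 q q 0 0 0) = sc q (e0 - e1)"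
    "br (L 0 0 q q 0 0 0 0 0) (L q q 0 0 0 0 0 0 0) = sc q (e2 - e3)"
proof -
  have "sc q (e4 - e5) = L 0 0 0 0 q (- q) 0 0 0" "sc q (e0 - e1) = L q (- q) 0 0 0 0 0 0 0"
    "sc q (e2 - e3) = L 0 0 q (- q) 0 0 0 0 0"
    by (simp_all add: L_def sc_diff_right sc_minus_left)
  moreover have "br (L 0 0 0 0 q q 0 0 0) (L 0 0 q q 0 0 0 0 0) = L 0 0 0 0 q (- q) 0 0 0"
    using q apply (simp add: Lsimps) apply (rule L_cong; ((simp; fail) | algebra)) done
  moreover have "br (L q q 0 0 0 0 0 0 0) (L 0 0 0 0 q q 0 0 0) = L q (- q) 0 0 0 0 0 0 0"
    using q apply (simp add: Lsimps) apply (rule L_cong; ((simp; fail) | algebra)) done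
  moreover have "br (L 0 0 q q 0 0 0 0 0) (L q q 0 0 0 0 0 0 0) = L 0 0 q (- q) 0 0 0 0 0"
    using q apply (simp add: Lsimps) apply (rule L_cong; ((simp; fail) | algebra)) done
  ultimately show "br (L 0 0 0 0 q q 0 0 0) (L 0 0 q q 0 0 0 0 0) = sc q (e4 - e5)"
    "br (L q q 0 0 0 0 0 0 0) (L 0 0 0 0 q q 0 0 0) = sc q (e0 - e1)"
    "br (L 0 0 q q 0 0 0 0 0) (L q q 0 0 0 0 0 0 0) = sc q (e2 - e3)" by simp_all
qed

lemma t_psi:
  "L 0 0 q q 0 0 0 0 0 = sc q (e2 + e3)" "L 0 0 0 0 q q 0 0 0 = sc q (e4 + e5)"
  "L q q 0 0 0 0 0 0 0 = sc q (e0 + e1)"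
  by (simp_all add: L_def sc_add_right)

lemma t_R3:
  assumes q: "4 * q = 1" and DG: "DG e0 e1" "DG e1 e0" "DG e2 e3" "DG e3 e2" "DG e4 e5" "DG e5 e4"
  shows "br (br (L 0 0 0 0 q q 0 0 0) (br (L 0 0 0 0 q q 0 0 0) (br (L 0 0 0 0 q q 0 0 0) (L 0 0 q q 0 0 0 0 0))))
            (br (L 0 0 0 0 q q 0 0 0) (L 0 0 q q 0 0 0 0 0)) = 0"
    "br (br (L q q 0 0 0 0 0 0 0) (br (L q q 0 0 0 0 0 0 0) (br (L q q 0 0 0 0 0 0 0) (L 0 0 0 0 q q 0 0 0))))
            (br (L q q 0 0 0 0 0 0 0) (L 0 0 0 0 q q 0 0 0)) = 0"
    "br (br (L 0 0 q q 0 0 0 0 0) (br (L 0 0 q q 0 0 0 0 0) (br (L 0 0 q q 0 0 0 0 0) (L q q 0 0 0 0 0 0 0))))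
            (br (L 0 0 q q 0 0 0 0 0) (L q q 0 0 0 0 0 0 0)) = 0"
  by (rule R3_gen[OF t_psi(2) t_brs(1)[OF q] DG(5,6)])
    (rule R3_gen[OF t_psi(3) t_brs(2)[OF q] DG(1,2)], rule R3_gen[OF t_psi(1) t_brs(3)[OF q] DG(3,4)])

lemma t_comp_1:
  assumes q: "4 * q = 1"
  shows "sc 2 (L q q 0 0 0 0 0 0 0 + sc (-1) (br (L 0 0 0 0 q q 0 0 0) (L q q 0 0 0 0 0 0 0))) = L 1 0 0 0 0 0 0 0 0"
  using q apply (simp add: Lsimps)
  apply (rule L_cong; ((simp; fail) | algebra))?
  done

lemma t_comp_2:
  assumes q: "4 * q = 1"
  shows "sc 2 (L q q 0 0 0 0 0 0 0 + br (L 0 0 0 0 q q 0 0 0) (L q q 0 0 0 0 0 0 0)) = L 0 1 0 0 0 0 0 0 0"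
  using q apply (simp add: Lsimps)
  apply (rule L_cong; ((simp; fail) | algebra))?
  done

lemma t_comp_3:
  assumes q: "4 * q = 1"
  shows "sc 2 (L 0 0 q q 0 0 0 0 0 + sc (-1) (br (L q q 0 0 0 0 0 0 0) (L 0 0 q q 0 0 0 0 0))) = L 0 0 1 0 0 0 0 0 0"
  using q apply (simp add: Lsimps)
  apply (rule L_cong; ((simp; fail) | algebra))?
  done

lemma t_comp_4:
  assumes q: "4 * q = 1"
  shows "sc 2 (L 0 0 q q 0 0 0 0 0 + br (L q q 0 0 0 0 0 0 0) (L 0 0 q q 0 0 0 0 0)) = L 0 0 0 1 0 0 0 0 0"
  using q apply (simp add: Lsimps)
  apply (rule L_cong; ((simp; fail) | algebra))?
  done

lemma t_comp_5:
  assumes q: "4 * q = 1"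
  shows "sc 2 (L 0 0 0 0 q q 0 0 0 + sc (-1) (br (L 0 0 q q 0 0 0 0 0) (L 0 0 0 0 q q 0 0 0))) = L 0 0 0 0 1 0 0 0 0"
  using q apply (simp add: Lsimps)
  apply (rule L_cong; ((simp; fail) | algebra))?
  done

lemma t_comp_6:
  assumes q: "4 * q = 1"
  shows "sc 2 (L 0 0 0 0 q q 0 0 0 + br (L 0 0 q q 0 0 0 0 0) (L 0 0 0 0 q q 0 0 0)) = L 0 0 0 0 0 1 0 0 0"
  using q apply (simp add: Lsimps)
  apply (rule L_cong; ((simp; fail) | algebra))?
  done

lemmas t_comp = t_comp_1 t_comp_2 t_comp_3 t_comp_4 t_comp_5 t_comp_6


lemma t_comp_minus:
  assumes q: "4 * q = 1"
  shows "sc 2 (L q q 0 0 0 0 0 0 0 - br (L 0 0 0 0 q q 0 0 0) (L q q 0 0 0 0 0 0 0)) = L 1 0 0 0 0 0 0 0 0"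
    "sc 2 (L 0 0 q q 0 0 0 0 0 - br (L q q 0 0 0 0 0 0 0) (L 0 0 q q 0 0 0 0 0)) = L 0 0 1 0 0 0 0 0 0"
    "sc 2 (L 0 0 0 0 q q 0 0 0 - br (L 0 0 q q 0 0 0 0 0) (L 0 0 0 0 q q 0 0 0)) = L 0 0 0 0 1 0 0 0 0"
  using t_comp_1[OF q] t_comp_3[OF q] t_comp_5[OF q] by (simp_all add: sc_minus_left sc_one)

end

context sixf
begin

lemma fimg_forms:
  "fimg 0 1 = sc 2 (e1 - e3)" "fimg 2 3 = sc 2 (e1 + e3)"
  "fimg 0 2 = sc 2 (e2 - e4)" "fimg 3 1 = sc 2 (e2 + e4)"
  "fimg 0 3 = sc 2 (e0 - e5)" "fimg 1 2 = sc 2 (e0 + e5)"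
  by (simp_all add: fimg_def tab6_def L_def sc_add_right sc_diff_right sc_minus_left sc_sc)

lemma fimg_rev:
  "fimg 1 0 = - fimg 0 1" "fimg 3 2 = - fimg 2 3" "fimg 2 0 = - fimg 0 2"
  "fimg 1 3 = - fimg 3 1" "fimg 3 0 = - fimg 0 3" "fimg 2 1 = - fimg 1 2"
  by (simp_all add: fimg_def tab6_def)

lemma fimg_anti: "i < 4 \<Longrightarrow> j < 4 \<Longrightarrow> i \<noteq> j \<Longrightarrow> fimg j i = - fimg i j"
  unfolding fimg_def by (rule tab6_anti)

lemma fimg_cubic:
  assumes "DG (fimg 0 1) (fimg 2 3)" "DG (fimg 2 3) (fimg 0 1)" "DG (fimg 0 2) (fimg 3 1)"
    "DG (fimg 3 1) (fimg 0 2)" "DG (fimg 0 3) (fimg 1 2)" "DG (fimg 1 2) (fimg 0 3)"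
    and "h < 4" "i < 4" "j < 4" "k < 4"
    and "h \<noteq> i" "h \<noteq> j" "h \<noteq> k" "i \<noteq> j" "i \<noteq> k" "j \<noteq> k"
  shows "DG (fimg h i) (fimg j k)"
  using assms unfolding fimg_def by (intro tab6_cubic) (simp_all add: tab6_def)

lemma f_comp:
  assumes q: "4 * q = 1"
  shows "sc q (fimg 0 1 + fimg 2 3) = e1" "sc q (fimg 0 2 + fimg 3 1) = e2" "sc q (fimg 0 3 + fimg 1 2) = e0"
proof -
  have "sc q (fimg 0 1 + fimg 2 3) = sc (q * 4) e1"
    unfolding fimg_forms by (simp add: sc_add_right sc_diff_right sc_sc sc_add_left[symmetric] algebra_simps)
  then show "sc q (fimg 0 1 + fimg 2 3) = e1" using q by (simp add: mult.commute sc_one)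
  have "sc q (fimg 0 2 + fimg 3 1) = sc (q * 4) e2"
    unfolding fimg_forms by (simp add: sc_add_right sc_diff_right sc_sc sc_add_left[symmetric] algebra_simps)
  then show "sc q (fimg 0 2 + fimg 3 1) = e2" using q by (simp add: mult.commute sc_one)
  have "sc q (fimg 0 3 + fimg 1 2) = sc (q * 4) e0"
    unfolding fimg_forms by (simp add: sc_add_right sc_diff_right sc_sc sc_add_left[symmetric] algebra_simps)
  then show "sc q (fimg 0 3 + fimg 1 2) = e0" using q by (simp add: mult.commute sc_one)
qed

end

declare One_nat_def [simp del]

lemma Fe_add: "f \<in> FM f_S \<Longrightarrow> g \<in> FM f_S \<Longrightarrow> Fp.emb (vadd f g) = (Fp.emb f + Fp.emb g :: 'k::field fq)"
  by (simp add: plus_fq_def Fp.qadd_emb)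
lemma Fe_sc: "f \<in> FM f_S \<Longrightarrow> Fp.emb (vsmult c f) = Fp.qsc c (Fp.emb f :: 'k::field fq)"
  by (simp add: Fp.qsc_emb)
lemma Fe_br: "f \<in> FM f_S \<Longrightarrow> g \<in> FM f_S \<Longrightarrow> Fp.emb (vbr f g) = Fp.qbr (Fp.emb f) (Fp.emb g :: 'k::field fq)"
  by (simp add: Fp.qbr_emb)
lemma Fe_zero: "Fp.emb vzero = (0 :: 'k::field fq)"
  by (simp add: zero_fq_def)
lemma Fe_sub: "f \<in> FM f_S \<Longrightarrow> g \<in> FM f_S \<Longrightarrow> Fp.emb (vsub f g) = (Fp.emb f - Fp.emb g :: 'k::field fq)"
  by (simp add: vsub_eq Fe_add Fe_sc minus_fq_def plus_fq_def)
lemma Fmem: "f \<in> FM f_S \<Longrightarrow> Fp.emb f = (0 :: 'k::field fq) \<Longrightarrow> f \<in> pideal f_S (f_R :: (nat,'k) fm set)"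
  by (simp add: Fp.emb_zero_iff Fe_zero[symmetric])
lemma Fmem': "f \<in> pideal f_S f_R \<Longrightarrow> Fp.emb f = (0 :: 'k::field fq)"
proof -
  assume h: "f \<in> pideal f_S f_R"
  then have "f \<in> FM f_S" using pideal_FM[OF f_R_FM] by blast
  then show ?thesis using h by (simp add: Fp.emb_zero_iff Fe_zero[symmetric])
qed

lemmas Fe = Fe_add Fe_sc Fe_br Fe_zero Fe_sub

lemma Te_add: "f \<in> FM tet_S \<Longrightarrow> g \<in> FM tet_S \<Longrightarrow> Tp.emb (vadd f g) = (Tp.emb f + Tp.emb g :: 'k::field tq)"
  by (simp add: plus_tq_def Tp.qadd_emb)
lemma Te_sc: "f \<in> FM tet_S \<Longrightarrow> Tp.emb (vsmult c f) = Tp.qsc c (Tp.emb f :: 'k::field tq)"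
  by (simp add: Tp.qsc_emb)
lemma Te_br: "f \<in> FM tet_S \<Longrightarrow> g \<in> FM tet_S \<Longrightarrow> Tp.emb (vbr f g) = Tp.qbr (Tp.emb f) (Tp.emb g :: 'k::field tq)"
  by (simp add: Tp.qbr_emb)
lemma Te_zero: "Tp.emb vzero = (0 :: 'k::field tq)"
  by (simp add: zero_tq_def)
lemma Te_sub: "f \<in> FM tet_S \<Longrightarrow> g \<in> FM tet_S \<Longrightarrow> Tp.emb (vsub f g) = (Tp.emb f - Tp.emb g :: 'k::field tq)"
  by (simp add: vsub_eq Te_add Te_sc minus_tq_def plus_tq_def)
lemma Tmem: "f \<in> FM tet_S \<Longrightarrow> Tp.emb f = (0 :: 'k::field tq) \<Longrightarrow> f \<in> pideal tet_S (tet_R :: (nat \<times> nat,'k) fm set)"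
  by (simp add: Tp.emb_zero_iff Te_zero[symmetric])
lemma Tmem': "f \<in> pideal tet_S tet_R \<Longrightarrow> Tp.emb f = (0 :: 'k::field tq)"
proof -
  assume h: "f \<in> pideal tet_S tet_R"
  then have "f \<in> FM tet_S" using pideal_FM[OF tet_R_FM] by blast
  then show ?thesis using h by (simp add: Tp.emb_zero_iff Te_zero[symmetric])
qed

lemmas Te = Te_add Te_sc Te_br Te_zero Te_sub

section \<open>Relations in f\<close>

definition zF :: "nat \<Rightarrow> 'k::field fq" where "zF n = Fp.emb (fz n)"

lemma fz_mod: "fz (i mod 3 + k) = fz (i + k)" by (simp add: fz_def mod_add_left_eq)
lemma fz_mod0: "fz (i mod 3) = fz i" by (simp add: fz_def)

lemma fR_emb: "r \<in> f_R \<Longrightarrow> Fp.emb r = (0 :: 'k::field fq)"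
  by (rule Fmem') (rule pideal.rel)

lemma fR_members:
  "vbr (vbr (fz i) (fz (i+1))) (fz (i+2)) \<in> f_R"
  "vsub (vbr (fz i) (vbr (fz i) (fz (i+1)))) (vadd (fz (i+1)) (vbr (fz (i+2)) (fz i))) \<in> f_R"
  "vbr (vbr (fz (i+1)) (vbr (fz (i+1)) (vbr (fz (i+1)) (fz i)))) (vbr (fz (i+1)) (fz i)) \<in> f_R"
proof -
  have lt: "i mod 3 < 3" by simp
  have "vbr (vbr (fz (i mod 3)) (fz (i mod 3+1))) (fz (i mod 3+2)) \<in> f_R"
    unfolding f_R_def using lt by blast
  then show "vbr (vbr (fz i) (fz (i+1))) (fz (i+2)) \<in> f_R" by (simp only: fz_mod fz_mod0)
  have "vsub (vbr (fz (i mod 3)) (vbr (fz (i mod 3)) (fz (i mod 3+1)))) (vadd (fz (i mod 3+1)) (vbr (fz (i mod 3+2)) (fz (i mod 3)))) \<in> f_R"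
    unfolding f_R_def using lt by blast
  then show "vsub (vbr (fz i) (vbr (fz i) (fz (i+1)))) (vadd (fz (i+1)) (vbr (fz (i+2)) (fz i))) \<in> f_R"
    by (simp only: fz_mod fz_mod0)
  have "vbr (vbr (fz (i mod 3+1)) (vbr (fz (i mod 3+1)) (vbr (fz (i mod 3+1)) (fz (i mod 3))))) (vbr (fz (i mod 3+1)) (fz (i mod 3))) \<in> f_R"
    unfolding f_R_def using lt by blast
  then show "vbr (vbr (fz (i+1)) (vbr (fz (i+1)) (vbr (fz (i+1)) (fz i)))) (vbr (fz (i+1)) (fz i)) \<in> f_R"
    by (simp only: fz_mod fz_mod0)
qed

interpretation Fr: frel "Fp.qsc :: 'k::field \<Rightarrow> 'k fq \<Rightarrow> 'k fq" Fp.qbr "zF :: nat \<Rightarrow> 'k fq"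
proof (rule frel.intro[OF F.lie_alg_axioms], rule frel_axioms.intro)
  fix i
  show "(zF (i + 3) :: 'k fq) = zF i" by (simp add: zF_def fz_def)
  show "Fp.qbr (Fp.qbr (zF i) (zF (i + 1))) (zF (i + 2)) = (0 :: 'k fq)"
    using fR_emb[OF fR_members(1)[of i]] by (simp add: Fe zF_def)
  show "Fp.qbr (zF i) (Fp.qbr (zF i) (zF (i + 1))) = (zF (i + 1) + Fp.qbr (zF (i + 2)) (zF i) :: 'k fq)"
    using fR_emb[OF fR_members(2)[of i]] by (simp add: Fe zF_def)
  show "Fp.qbr (Fp.qbr (zF (i + 1)) (Fp.qbr (zF (i + 1)) (Fp.qbr (zF (i + 1)) (zF i)))) (Fp.qbr (zF (i + 1)) (zF i)) = (0 :: 'k fq)"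
    using fR_emb[OF fR_members(3)[of i]] by (simp add: Fe zF_def)
qed

lemma zF_num: "(zF 3 :: 'k::field fq) = zF 0" "(zF 4 :: 'k fq) = zF 1" "(zF 5 :: 'k fq) = zF 2"
  by (simp_all add: zF_def fz_def One_nat_def)

lemma nat_arith: "(0::nat) + 1 = 1" "(0::nat) + 2 = 2" "(1::nat) + 1 = 2" "(1::nat) + 2 = 3"
  "(2::nat) + 1 = 3" "(2::nat) + 2 = 4" by simp_all

lemma Ffacts:
  "Fp.qbr (Fp.qbr (zF 0) (zF 1)) (zF 2) = (0 :: 'k::field fq)"
  "Fp.qbr (Fp.qbr (zF 1) (zF 2)) (zF 0) = (0 :: 'k::field fq)"
  "Fp.qbr (Fp.qbr (zF 2) (zF 0)) (zF 1) = (0 :: 'k::field fq)"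
  "Fp.qbr (zF 0) (Fp.qbr (zF 0) (zF 1)) = (zF 1 + Fp.qbr (zF 2) (zF 0) :: 'k::field fq)"
  "Fp.qbr (zF 1) (Fp.qbr (zF 1) (zF 2)) = (zF 2 + Fp.qbr (zF 0) (zF 1) :: 'k::field fq)"
  "Fp.qbr (zF 2) (Fp.qbr (zF 2) (zF 0)) = (zF 0 + Fp.qbr (zF 1) (zF 2) :: 'k::field fq)"
  "Fp.qbr (Fp.qbr (zF 0) (zF 1)) (Fp.qbr (zF 2) (zF 0)) = (- zF 0 :: 'k::field fq)"
  "Fp.qbr (Fp.qbr (zF 1) (zF 2)) (Fp.qbr (zF 0) (zF 1)) = (- zF 1 :: 'k::field fq)"
  "Fp.qbr (Fp.qbr (zF 2) (zF 0)) (Fp.qbr (zF 1) (zF 2)) = (- zF 2 :: 'k::field fq)"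
  using Fr.frame_basic[of 0] Fr.wc[of 0] Fr.wc[of 1] Fr.wc[of 2] by (simp_all only: nat_arith zF_num)

interpretation Fs: sixf "Fp.qsc :: 'k::field \<Rightarrow> 'k fq \<Rightarrow> 'k fq" Fp.qbr "zF 1" "zF 2" "zF 0"
  "Fp.qbr (zF 1) (zF 2)" "Fp.qbr (zF 2) (zF 0)" "Fp.qbr (zF 0) (zF 1)"
  "Fp.qbr (zF 1) (Fp.qbr (zF 0) (zF 1))" "Fp.qbr (zF 2) (Fp.qbr (zF 1) (zF 2))" "Fp.qbr (zF 0) (Fp.qbr (zF 2) (zF 0))"
proof (rule sixf.intro[OF F.lie_alg_axioms], rule sixf_axioms.intro)
  note A = Ffacts[where 'k='k]
  show "Fp.qbr (zF 1) (zF 2) = (Fp.qbr (zF 1) (zF 2) :: 'k fq)" by (rule refl)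
  show "Fp.qbr (zF 1) (zF 0) = (- Fp.qbr (zF 0) (zF 1) :: 'k fq)" by (rule F.br_anti)
  show "Fp.qbr (zF 1) (Fp.qbr (zF 1) (zF 2)) = (zF 2 + Fp.qbr (zF 0) (zF 1) :: 'k fq)" by (rule A(5))
  show "Fp.qbr (zF 1) (Fp.qbr (zF 2) (zF 0)) = (0 :: 'k fq)"
    by (simp only: F.br_anti[of "zF 1" "Fp.qbr (zF 2) (zF 0)"] A(3) minus_zero minus_minus)
  show "Fp.qbr (zF 1) (Fp.qbr (zF 0) (zF 1)) = (Fp.qbr (zF 1) (Fp.qbr (zF 0) (zF 1)) :: 'k fq)" by (rule refl)
  show "Fp.qbr (zF 2) (zF 0) = (Fp.qbr (zF 2) (zF 0) :: 'k fq)" by (rule refl)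
  show "Fp.qbr (zF 2) (Fp.qbr (zF 1) (zF 2)) = (Fp.qbr (zF 2) (Fp.qbr (zF 1) (zF 2)) :: 'k fq)" by (rule refl)
  show "Fp.qbr (zF 2) (Fp.qbr (zF 2) (zF 0)) = (zF 0 + Fp.qbr (zF 1) (zF 2) :: 'k fq)" by (rule A(6))
  show "Fp.qbr (zF 2) (Fp.qbr (zF 0) (zF 1)) = (0 :: 'k fq)"
    by (simp only: F.br_anti[of "zF 2" "Fp.qbr (zF 0) (zF 1)"] A(1) minus_zero minus_minus)
  show "Fp.qbr (zF 0) (Fp.qbr (zF 1) (zF 2)) = (0 :: 'k fq)"
    by (simp only: F.br_anti[of "zF 0" "Fp.qbr (zF 1) (zF 2)"] A(2) minus_zero minus_minus)
  show "Fp.qbr (zF 0) (Fp.qbr (zF 2) (zF 0)) = (Fp.qbr (zF 0) (Fp.qbr (zF 2) (zF 0)) :: 'k fq)" by (rule refl)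
  show "Fp.qbr (zF 0) (Fp.qbr (zF 0) (zF 1)) = (zF 1 + Fp.qbr (zF 2) (zF 0) :: 'k fq)" by (rule A(4))
  show "Fp.qbr (Fp.qbr (zF 1) (zF 2)) (Fp.qbr (zF 2) (zF 0)) = (zF 2 :: 'k fq)"
    by (simp only: F.br_anti[of "Fp.qbr (zF 1) (zF 2)" "Fp.qbr (zF 2) (zF 0)"] A(9) minus_zero minus_minus)
  show "Fp.qbr (Fp.qbr (zF 1) (zF 2)) (Fp.qbr (zF 0) (zF 1)) = (- zF 1 :: 'k fq)" by (rule A(8))
  show "Fp.qbr (Fp.qbr (zF 2) (zF 0)) (Fp.qbr (zF 0) (zF 1)) = (zF 0 :: 'k fq)"
    by (simp only: F.br_anti[of "Fp.qbr (zF 2) (zF 0)" "Fp.qbr (zF 0) (zF 1)"] A(7) minus_zero minus_minus)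
qed

lemma F_DG:
  "F.DG (Fs.fimg 0 1) (Fs.fimg 2 3 :: 'k::field fq)" "F.DG (Fs.fimg 2 3) (Fs.fimg 0 1 :: 'k::field fq)"
  "F.DG (Fs.fimg 0 2) (Fs.fimg 3 1 :: 'k::field fq)" "F.DG (Fs.fimg 3 1) (Fs.fimg 0 2 :: 'k::field fq)"
  "F.DG (Fs.fimg 0 3) (Fs.fimg 1 2 :: 'k::field fq)" "F.DG (Fs.fimg 1 2) (Fs.fimg 0 3 :: 'k::field fq)"
  using Fr.DGf[of 0] Fr.DGf[of 1] Fr.DGf[of 2] by (simp_all only: Fs.fimg_forms nat_arith zF_num)

section \<open>The map from the tetrahedron algebra to f\<close>

definition sig :: "nat \<times> nat \<Rightarrow> (nat,'k::field) fm" where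
  "sig p = tab6 (vsmult (-1)) vzero
     (vsmult 2 (vadd (vgen 2) (vsmult (-1) (vbr (vgen 1) (vgen 2)))))
     (vsmult 2 (vadd (vgen 2) (vbr (vgen 1) (vgen 2))))
     (vsmult 2 (vadd (vgen 0) (vsmult (-1) (vbr (vgen 2) (vgen 0)))))
     (vsmult 2 (vadd (vgen 0) (vbr (vgen 2) (vgen 0))))
     (vsmult 2 (vadd (vgen 1) (vsmult (-1) (vbr (vgen 0) (vgen 1)))))
     (vsmult 2 (vadd (vgen 1) (vbr (vgen 0) (vgen 1))))
     (fst p) (snd p)"

lemma sig_FM[simp]: "sig p \<in> FM f_S"
  by (simp add: sig_def tab6_def f_S_def)

lemma FM_fgen[simp]: "vgen 0 \<in> FM f_S" "vgen 1 \<in> FM f_S" "vgen 2 \<in> FM f_S"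
  by (simp_all add: f_S_def)

lemma Fgen: "Fp.emb (vgen 0) = (zF 0 :: 'k::field fq)" "Fp.emb (vgen 1) = (zF 1 :: 'k::field fq)"
  "Fp.emb (vgen 2) = (zF 2 :: 'k::field fq)"
  by (simp_all add: zF_def fz_def)

lemma emb_sig:
  assumes "i < 4" "j < 4" "i \<noteq> j"
  shows "Fp.emb (sig (i,j)) = (Fs.fimg i j :: 'k::field fq)"
  using less4_cases[OF assms(1)] less4_cases[OF assms(2)] assms(3)
  by (elim disjE; simp only:; simp add: sig_def tab6_def Fe Fgen Fs.fimg_forms Fs.fimg_rev
      F.sc_minus_left F.sc_one)

lemma Ev_sig_tX: "Ev sig (tX i j) = sig (i,j)" by (simp add: tX_def)

lemma sig_rels: "r \<in> tet_R \<Longrightarrow> Ev (sig :: _ \<Rightarrow> (nat,'k::field) fm) r \<in> pideal f_S f_R"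
proof -
  assume "r \<in> tet_R"
  then have "(\<exists>i j. r = vadd (tX i j) (tX j i) \<and> i < 4 \<and> j < 4 \<and> i \<noteq> j) \<or>
      (\<exists>i j k. r = vsub (vbr (tX i j) (tX j k)) (vsmult 2 (vadd (tX i j) (tX j k))) \<and>
        i < 4 \<and> j < 4 \<and> k < 4 \<and> i \<noteq> j \<and> j \<noteq> k \<and> i \<noteq> k) \<or>
      (\<exists>h i j k. r = vsub (vbr (tX h i) (vbr (tX h i) (vbr (tX h i) (tX j k)))) (vsmult 4 (vbr (tX h i) (tX j k))) \<and>
        h < 4 \<and> i < 4 \<and> j < 4 \<and> k < 4 \<and> h \<noteq> i \<and> h \<noteq> j \<and> h \<noteq> k \<and> i \<noteq> j \<and> i \<noteq> k \<and> j \<noteq> k)"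
    unfolding tet_R_def by (simp only: Un_iff mem_Collect_eq disj_assoc)
  then show "Ev (sig :: _ \<Rightarrow> (nat,'k::field) fm) r \<in> pideal f_S f_R"
  proof (elim disjE exE conjE)
    fix i j assume a: "r = vadd (tX i j) (tX j i)" "i < 4" "j < 4" "i \<noteq> j"
    have "Ev (sig :: _ \<Rightarrow> (nat,'k::field) fm) r = vadd (sig (i,j)) (sig (j,i))"
      using a by (simp add: tX_def Ev_vadd)
    moreover have "Fp.emb (vadd (sig (i,j)) (sig (j,i))) = (0 :: 'k fq)"
      using a by (simp add: Fe emb_sig Fs.fimg_anti[of i j])
    ultimately show ?thesis by (simp add: Fmem)
  next
    fix i j k assume b: "r = vsub (vbr (tX i j) (tX j k)) (vsmult 2 (vadd (tX i j) (tX j k)))"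
        "i < 4" "j < 4" "k < 4" "i \<noteq> j" "j \<noteq> k" "i \<noteq> k"
    have "Ev (sig :: _ \<Rightarrow> (nat,'k::field) fm) r =
        vsub (vbr (sig (i,j)) (sig (j,k))) (vsmult 2 (vadd (sig (i,j)) (sig (j,k))))"
      using b by (simp add: tX_def Ev_vadd Ev_vsub Ev_vbr Ev_vsmult)
    moreover have "Fp.emb (vsub (vbr (sig (i,j)) (sig (j,k))) (vsmult 2 (vadd (sig (i,j)) (sig (j,k))))) = (0 :: 'k fq)"
      using b by (simp add: Fe emb_sig Fs.fimg_quad)
    ultimately show ?thesis by (simp add: Fmem)
  next
    fix h i j k assume c: "r = vsub (vbr (tX h i) (vbr (tX h i) (vbr (tX h i) (tX j k)))) (vsmult 4 (vbr (tX h i) (tX j k)))"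
        "h < 4" "i < 4" "j < 4" "k < 4" "h \<noteq> i" "h \<noteq> j" "h \<noteq> k" "i \<noteq> j" "i \<noteq> k" "j \<noteq> k"
    have "Ev (sig :: _ \<Rightarrow> (nat,'k::field) fm) r =
        vsub (vbr (sig (h,i)) (vbr (sig (h,i)) (vbr (sig (h,i)) (sig (j,k))))) (vsmult 4 (vbr (sig (h,i)) (sig (j,k))))"
      using c by (simp add: tX_def Ev_vadd Ev_vsub Ev_vbr Ev_vsmult)
    moreover have "F.DG (Fs.fimg h i) (Fs.fimg j k :: 'k fq)"
      by (rule Fs.fimg_cubic[OF F_DG c(2-11)])
    then have "Fp.emb (vsub (vbr (sig (h,i)) (vbr (sig (h,i)) (vbr (sig (h,i)) (sig (j,k))))) (vsmult 4 (vbr (sig (h,i)) (sig (j,k))))) = (0 :: 'k fq)"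
      using c by (simp add: Fe emb_sig F.DG_def)
    ultimately show ?thesis by (simp add: Fmem)
  qed
qed

section \<open>Relations in the tetrahedron algebra\<close>

definition XT :: "nat \<Rightarrow> nat \<Rightarrow> 'k::field tq" where "XT i j = Tp.emb (vgen (i,j))"

lemma tR_emb: "r \<in> tet_R \<Longrightarrow> Tp.emb r = (0 :: 'k::field tq)"
  by (rule Tmem') (rule pideal.rel)

lemma FM_tgen[simp]: "i < 4 \<Longrightarrow> j < 4 \<Longrightarrow> i \<noteq> j \<Longrightarrow> vgen (i,j) \<in> FM tet_S"
  by (simp add: tet_S_def)

lemma Tanti: "i < 4 \<Longrightarrow> j < 4 \<Longrightarrow> i \<noteq> j \<Longrightarrow> (XT j i :: 'k::field tq) = - XT i j"
proof -
  assume h: "i < 4" "j < 4" "i \<noteq> j"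
  then have "vadd (tX i j) (tX j i) \<in> (tet_R :: (nat \<times> nat, 'k) fm set)" unfolding tet_R_def by blast
  from tR_emb[OF this] have "(XT i j :: 'k tq) + XT j i = 0" using h by (simp add: tX_def Te XT_def)
  then show ?thesis by (simp add: eq_neg_iff_add_eq_0 add.commute)
qed

lemma Tquad: "i < 4 \<Longrightarrow> j < 4 \<Longrightarrow> k < 4 \<Longrightarrow> i \<noteq> j \<Longrightarrow> j \<noteq> k \<Longrightarrow> i \<noteq> k \<Longrightarrow>
    Tp.qbr (XT i j) (XT j k) = (Tp.qsc 2 (XT i j + XT j k) :: 'k::field tq)"
proof -
  assume h: "i < 4" "j < 4" "k < 4" "i \<noteq> j" "j \<noteq> k" "i \<noteq> k"
  then have "vsub (vbr (tX i j) (tX j k)) (vsmult 2 (vadd (tX i j) (tX j k))) \<in> (tet_R :: (nat \<times> nat, 'k) fm set)"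
    unfolding tet_R_def by blast
  from tR_emb[OF this] have "Tp.qbr (XT i j) (XT j k) - Tp.qsc 2 (XT i j + XT j k) = (0 :: 'k tq)"
    using h by (simp add: tX_def Te XT_def)
  then show ?thesis by simp
qed

lemma Tcub: "h < 4 \<Longrightarrow> i < 4 \<Longrightarrow> j < 4 \<Longrightarrow> k < 4 \<Longrightarrow> h \<noteq> i \<Longrightarrow> h \<noteq> j \<Longrightarrow> h \<noteq> k \<Longrightarrow>
    i \<noteq> j \<Longrightarrow> i \<noteq> k \<Longrightarrow> j \<noteq> k \<Longrightarrow> T.DG (XT h i) (XT j k :: 'k::field tq)"
proof -
  assume h: "h < 4" "i < 4" "j < 4" "k < 4" "h \<noteq> i" "h \<noteq> j" "h \<noteq> k" "i \<noteq> j" "i \<noteq> k" "j \<noteq> k"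
  then have "vsub (vbr (tX h i) (vbr (tX h i) (vbr (tX h i) (tX j k)))) (vsmult 4 (vbr (tX h i) (tX j k)))
      \<in> (tet_R :: (nat \<times> nat, 'k) fm set)"
    unfolding tet_R_def by blast
  from tR_emb[OF this] have "Tp.qbr (XT h i) (Tp.qbr (XT h i) (Tp.qbr (XT h i) (XT j k))) - Tp.qsc 4 (Tp.qbr (XT h i) (XT j k)) = (0 :: 'k tq)"
    using h by (simp add: tX_def Te XT_def)
  then show ?thesis by (simp add: T.DG_def)
qed

interpretation Ts: sixt "Tp.qsc :: 'k::field \<Rightarrow> 'k tq \<Rightarrow> 'k tq" Tp.qbr "XT 0 1" "XT 2 3" "XT 0 2" "XT 3 1" "XT 0 3" "XT 1 2"
  "Tp.qbr (XT 0 1) (XT 2 3)" "Tp.qbr (XT 0 2) (XT 3 1)" "Tp.qbr (XT 0 3) (XT 1 2)"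
proof (rule sixt.intro[OF T.lie_alg_axioms], rule sixt_axioms.intro)
  show "Tp.qbr (XT 0 1) (XT 2 3) = (Tp.qbr (XT 0 1) (XT 2 3) :: 'k tq)" by (rule refl)
  show "Tp.qbr (XT 0 1) (XT 0 2) = (Tp.qsc 2 (XT 0 1) - Tp.qsc 2 (XT 0 2) :: 'k tq)"
    apply (subst neg_equal_iff_equal[symmetric])
    using Tquad[where 'k='k, of 1 0 2] Tanti[where 'k='k, of 0 1] by (simp add: T.br_minus_left T.br_minus_right T.sc_add_right T.sc_minus_right T.sc_diff_right)
  show "Tp.qbr (XT 0 1) (XT 3 1) = (Tp.qsc 2 (XT 3 1) - Tp.qsc 2 (XT 0 1) :: 'k tq)"
    apply (subst neg_equal_iff_equal[symmetric])
    using Tquad[where 'k='k, of 0 1 3] Tanti[where 'k='k, of 3 1] by (simp add: T.br_minus_left T.br_minus_right T.sc_add_right T.sc_minus_right T.sc_diff_right)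
  show "Tp.qbr (XT 0 1) (XT 0 3) = (Tp.qsc 2 (XT 0 1) - Tp.qsc 2 (XT 0 3) :: 'k tq)"
    apply (subst neg_equal_iff_equal[symmetric])
    using Tquad[where 'k='k, of 1 0 3] Tanti[where 'k='k, of 0 1] by (simp add: T.br_minus_left T.br_minus_right T.sc_add_right T.sc_minus_right T.sc_diff_right)
  show "Tp.qbr (XT 0 1) (XT 1 2) = (Tp.qsc 2 (XT 0 1) + Tp.qsc 2 (XT 1 2) :: 'k tq)"
    using Tquad[where 'k='k, of 0 1 2] by (simp add: T.br_minus_left T.br_minus_right T.sc_add_right T.sc_minus_right T.sc_diff_right)
  show "Tp.qbr (XT 2 3) (XT 0 2) = (- Tp.qsc 2 (XT 2 3) - Tp.qsc 2 (XT 0 2) :: 'k tq)"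
    apply (subst neg_equal_iff_equal[symmetric])
    using Tquad[where 'k='k, of 0 2 3] by (simp add: T.br_minus_left T.br_minus_right T.sc_add_right T.sc_minus_right T.sc_diff_right T.br_anti[of "XT 0 2" "XT 2 3"])
  show "Tp.qbr (XT 2 3) (XT 3 1) = (Tp.qsc 2 (XT 2 3) + Tp.qsc 2 (XT 3 1) :: 'k tq)"
    apply (subst neg_equal_iff_equal[symmetric])
    using Tquad[where 'k='k, of 1 3 2] Tanti[where 'k='k, of 3 1] Tanti[where 'k='k, of 2 3] by (simp add: T.br_minus_left T.br_minus_right T.sc_add_right T.sc_minus_right T.sc_diff_right T.br_anti[of "XT 3 1" "XT 2 3"])
  show "Tp.qbr (XT 2 3) (XT 0 3) = (Tp.qsc 2 (XT 0 3) - Tp.qsc 2 (XT 2 3) :: 'k tq)"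
    using Tquad[where 'k='k, of 0 3 2] Tanti[where 'k='k, of 2 3] by (simp add: T.br_minus_left T.br_minus_right T.sc_add_right T.sc_minus_right T.sc_diff_right T.br_anti[of "XT 0 3" "XT 2 3"])
  show "Tp.qbr (XT 2 3) (XT 1 2) = (- Tp.qsc 2 (XT 2 3) - Tp.qsc 2 (XT 1 2) :: 'k tq)"
    apply (subst neg_equal_iff_equal[symmetric])
    using Tquad[where 'k='k, of 1 2 3] by (simp add: T.br_minus_left T.br_minus_right T.sc_add_right T.sc_minus_right T.sc_diff_right T.br_anti[of "XT 1 2" "XT 2 3"])
  show "Tp.qbr (XT 0 2) (XT 3 1) = (Tp.qbr (XT 0 2) (XT 3 1) :: 'k tq)" by (rule refl)
  show "Tp.qbr (XT 0 2) (XT 0 3) = (Tp.qsc 2 (XT 0 2) - Tp.qsc 2 (XT 0 3) :: 'k tq)"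
    apply (subst neg_equal_iff_equal[symmetric])
    using Tquad[where 'k='k, of 2 0 3] Tanti[where 'k='k, of 0 2] by (simp add: T.br_minus_left T.br_minus_right T.sc_add_right T.sc_minus_right T.sc_diff_right)
  show "Tp.qbr (XT 0 2) (XT 1 2) = (Tp.qsc 2 (XT 1 2) - Tp.qsc 2 (XT 0 2) :: 'k tq)"
    apply (subst neg_equal_iff_equal[symmetric])
    using Tquad[where 'k='k, of 0 2 1] Tanti[where 'k='k, of 1 2] by (simp add: T.br_minus_left T.br_minus_right T.sc_add_right T.sc_minus_right T.sc_diff_right)
  show "Tp.qbr (XT 3 1) (XT 0 3) = (- Tp.qsc 2 (XT 3 1) - Tp.qsc 2 (XT 0 3) :: 'k tq)"
    apply (subst neg_equal_iff_equal[symmetric])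
    using Tquad[where 'k='k, of 0 3 1] by (simp add: T.br_minus_left T.br_minus_right T.sc_add_right T.sc_minus_right T.sc_diff_right T.br_anti[of "XT 0 3" "XT 3 1"])
  show "Tp.qbr (XT 3 1) (XT 1 2) = (Tp.qsc 2 (XT 3 1) + Tp.qsc 2 (XT 1 2) :: 'k tq)"
    apply (subst neg_equal_iff_equal[symmetric])
    using Tquad[where 'k='k, of 2 1 3] Tanti[where 'k='k, of 1 2] Tanti[where 'k='k, of 3 1] by (simp add: T.br_minus_left T.br_minus_right T.sc_add_right T.sc_minus_right T.sc_diff_right T.br_anti[of "XT 1 2" "XT 3 1"])
  show "Tp.qbr (XT 0 3) (XT 1 2) = (Tp.qbr (XT 0 3) (XT 1 2) :: 'k tq)" by (rule refl)
qed

section \<open>The map from f to the tetrahedron algebra\<close>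

definition tau :: "nat \<Rightarrow> (nat \<times> nat,'k::field) fm" where
  "tau n = (if n = 0 then vsmult (1/4) (vadd (tX 0 2) (tX 3 1))
    else if n = 1 then vsmult (1/4) (vadd (tX 0 3) (tX 1 2))
    else if n = 2 then vsmult (1/4) (vadd (tX 0 1) (tX 2 3)) else vzero)"

lemma tau_FM[simp]: "tau n \<in> FM tet_S"
  by (simp add: tau_def tX_def)

lemma emb_tau:
  "Tp.emb (tau 0) = (Ts.L 0 0 (1/4) (1/4) 0 0 0 0 0 :: 'k::field tq)"
  "Tp.emb (tau 1) = (Ts.L 0 0 0 0 (1/4) (1/4) 0 0 0 :: 'k::field tq)"
  "Tp.emb (tau 2) = (Ts.L (1/4) (1/4) 0 0 0 0 0 0 0 :: 'k::field tq)"
  by (simp_all add: tau_def tX_def Te XT_def[symmetric] Ts.L_def T.sc_add_right)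

lemma tau_Suc: "tau (Suc 0) = tau 1" "tau (Suc (Suc 0)) = tau 2"
  by (simp_all add: numeral_2_eq_2 One_nat_def)

lemma Ev_fz: "Ev \<sigma> (fz n) = \<sigma> (n mod 3)" by (simp add: fz_def)

lemma T_DG:
  "T.DG (XT 0 1) (XT 2 3 :: 'k::field tq)" "T.DG (XT 2 3) (XT 0 1 :: 'k::field tq)"
  "T.DG (XT 0 2) (XT 3 1 :: 'k::field tq)" "T.DG (XT 3 1) (XT 0 2 :: 'k::field tq)"
  "T.DG (XT 0 3) (XT 1 2 :: 'k::field tq)" "T.DG (XT 1 2) (XT 0 3 :: 'k::field tq)"
  by (rule Tcub; simp)+

lemma fz_FM_UNIV[simp]: "fz n \<in> FM UNIV" by (simp add: fz_def)

lemma tau_rels: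
  assumes q4: "4 * (1/4 :: 'k::field) = 1"
  shows "r \<in> f_R \<Longrightarrow> Ev (tau :: _ \<Rightarrow> (nat \<times> nat,'k) fm) r \<in> pideal tet_S tet_R"
proof -
  assume "r \<in> f_R"
  then have "(\<exists>i. r = vbr (vbr (fz i) (fz (i+1))) (fz (i+2)) \<and> i < 3) \<or>
      (\<exists>i. r = vsub (vbr (fz i) (vbr (fz i) (fz (i+1)))) (vadd (fz (i+1)) (vbr (fz (i+2)) (fz i))) \<and> i < 3) \<or>
      (\<exists>i. r = vbr (vbr (fz (i+1)) (vbr (fz (i+1)) (vbr (fz (i+1)) (fz i)))) (vbr (fz (i+1)) (fz i)) \<and> i < 3)"
    unfolding f_R_def by (simp only: Un_iff mem_Collect_eq disj_assoc)
  moreover have "Ev (tau :: _ \<Rightarrow> (nat \<times> nat,'k) fm) r \<in> FM tet_S"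
    using \<open>r \<in> f_R\<close> f_R_FM by (intro Ev_FM[where S = f_S]) auto
  moreover note R1 = Ts.t_R1[OF q4] and R2 = Ts.t_R2[OF q4] and R3 = Ts.t_R3[OF q4 T_DG]
  ultimately show ?thesis
  proof (elim disjE exE conjE)
    fix i :: nat assume r: "r = vbr (vbr (fz i) (fz (i+1))) (fz (i+2))" "i < 3" and FMr: "Ev tau r \<in> FM tet_S"
    from r(2) have "i = 0 \<or> i = 1 \<or> i = 2" by auto
    then have "Tp.emb (Ev tau r) = (0 :: 'k tq)"
      by (elim disjE) (simp_all add: r(1) Ev_vbr Ev_fz tau_Suc Te emb_tau R1 Ts.L_zero)
    then show ?thesis using FMr by (rule Tmem[rotated])
  next
    fix i :: nat assume r: "r = vsub (vbr (fz i) (vbr (fz i) (fz (i+1)))) (vadd (fz (i+1)) (vbr (fz (i+2)) (fz i)))" "i < 3"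
      and FMr: "Ev tau r \<in> FM tet_S"
    from r(2) have "i = 0 \<or> i = 1 \<or> i = 2" by auto
    then have "Tp.emb (Ev tau r) = (0 :: 'k tq)"
      by (elim disjE) (simp_all add: r(1) Ev_vbr Ev_vsub Ev_vadd Ev_fz tau_Suc Te emb_tau R2)
    then show ?thesis using FMr by (rule Tmem[rotated])
  next
    fix i :: nat assume r: "r = vbr (vbr (fz (i+1)) (vbr (fz (i+1)) (vbr (fz (i+1)) (fz i)))) (vbr (fz (i+1)) (fz i))" "i < 3"
      and FMr: "Ev tau r \<in> FM tet_S"
    from r(2) have "i = 0 \<or> i = 1 \<or> i = 2" by auto
    then have "Tp.emb (Ev tau r) = (0 :: 'k tq)"
      by (elim disjE) (simp_all add: r(1) Ev_vbr Ev_fz tau_Suc Te emb_tau R3)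
    then show ?thesis using FMr by (rule Tmem[rotated])
  qed
qed

lemma gen_t:
  assumes q4: "4 * (1/4 :: 'k::field) = 1"
  shows "\<forall>x\<in>tet_S. vsub (Ev tau (sig x)) (vgen x) \<in> pideal tet_S (tet_R :: (nat \<times> nat,'k) fm set)"
proof
  fix x :: "nat \<times> nat" assume "x \<in> tet_S"
  then obtain i j where x: "x = (i,j)" "i < 4" "j < 4" "i \<noteq> j" by (auto simp: tet_S_def)
  have FMx: "vsub (Ev (tau :: _ \<Rightarrow> (nat \<times> nat,'k) fm) (sig x)) (vgen x) \<in> FM tet_S"
  proof -
    have "Ev (tau :: _ \<Rightarrow> (nat \<times> nat,'k) fm) (sig x) \<in> FM tet_S" by (rule Ev_FM[where S = f_S]) auto
    then show ?thesis using x by simp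
  qed
  note C = Ts.t_comp[OF q4] Ts.t_comp_minus[OF q4]
  have L1: "Ts.L 1 0 0 0 0 0 0 0 0 = (XT 0 1 :: 'k tq)" "Ts.L 0 1 0 0 0 0 0 0 0 = (XT 2 3 :: 'k tq)"
    "Ts.L 0 0 1 0 0 0 0 0 0 = (XT 0 2 :: 'k tq)" "Ts.L 0 0 0 1 0 0 0 0 0 = (XT 3 1 :: 'k tq)"
    "Ts.L 0 0 0 0 1 0 0 0 0 = (XT 0 3 :: 'k tq)" "Ts.L 0 0 0 0 0 1 0 0 0 = (XT 1 2 :: 'k tq)"
    by (simp_all add: Ts.L_def T.sc_one)
  have A: "XT 1 0 = - (XT 0 1 :: 'k tq)" "XT 3 2 = - (XT 2 3 :: 'k tq)" "XT 2 0 = - (XT 0 2 :: 'k tq)"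
    "XT 1 3 = - (XT 3 1 :: 'k tq)" "XT 3 0 = - (XT 0 3 :: 'k tq)" "XT 2 1 = - (XT 1 2 :: 'k tq)"
    by (rule Tanti; simp)+
  have "Tp.emb (vsub (Ev (tau :: _ \<Rightarrow> (nat \<times> nat,'k) fm) (sig (i,j))) (vgen (i,j))) = (0 :: 'k tq)"
    using less4_cases[OF x(2)] less4_cases[OF x(3)] x(4)
    by (elim disjE; simp only:; simp add: sig_def tab6_def Ev_vadd Ev_vsmult Ev_vbr Te emb_tau
        tau_Suc C L1 XT_def[symmetric] A T.sc_minus_left T.sc_one)
  then show "vsub (Ev tau (sig x)) (vgen x) \<in> pideal tet_S (tet_R :: (nat \<times> nat,'k) fm set)"
    using FMx x(1) by (simp add: Tmem)
qed

lemma gen_f: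
  assumes q4: "4 * (1/4 :: 'k::field) = 1"
  shows "\<forall>x\<in>f_S. vsub (Ev sig (tau x)) (vgen x) \<in> pideal f_S (f_R :: (nat,'k) fm set)"
proof
  fix x :: nat assume "x \<in> f_S"
  then have x: "x = 0 \<or> x = 1 \<or> x = 2" by (auto simp: f_S_def)
  have FMx: "vsub (Ev (sig :: _ \<Rightarrow> (nat,'k) fm) (tau x)) (vgen x) \<in> FM f_S"
  proof -
    have "Ev (sig :: _ \<Rightarrow> (nat,'k) fm) (tau x) \<in> FM f_S" by (rule Ev_FM[where S = tet_S]) auto
    then show ?thesis using x by (auto simp: f_S_def)
  qed
  note C = Fs.f_comp[OF q4]
  have "Fp.emb (vsub (Ev (sig :: _ \<Rightarrow> (nat,'k) fm) (tau x)) (vgen x)) = (0 :: 'k fq)"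
    using x by (elim disjE; simp only:; simp add: tau_def tX_def Ev_vadd Ev_vsmult Fe Fgen emb_sig C)
  then show "vsub (Ev sig (tau x)) (vgen x) \<in> pideal f_S (f_R :: (nat,'k) fm set)"
    using FMx by (simp add: Fmem)
qed

theorem theorem5p2:
  assumes char_not_2: "(2::'k::field) \<noteq> 0"
  shows "\<exists>\<Phi>. plie_iso tet_S (tet_R :: (nat \<times> nat, 'k) fm set) f_S (f_R :: (nat, 'k) fm set) \<Phi> \<and>
     \<Phi> (TX 0 1) = Fsmult 2 (Fadd (Z 2) (Fsmult (-1) (Fbr (Z 1) (Z 2)))) \<and>
     \<Phi> (TX 2 3) = Fsmult 2 (Fadd (Z 2) (Fbr (Z 1) (Z 2))) \<and>
     \<Phi> (TX 0 2) = Fsmult 2 (Fadd (Z 0) (Fsmult (-1) (Fbr (Z 2) (Z 0)))) \<and>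
     \<Phi> (TX 3 1) = Fsmult 2 (Fadd (Z 0) (Fbr (Z 2) (Z 0))) \<and>
     \<Phi> (TX 0 3) = Fsmult 2 (Fadd (Z 1) (Fsmult (-1) (Fbr (Z 0) (Z 1)))) \<and>
     \<Phi> (TX 1 2) = Fsmult 2 (Fadd (Z 1) (Fbr (Z 0) (Z 1)))"
proof -
  have four: "(4::'k) \<noteq> 0"
  proof -
    have a: "(2::'k) * 2 \<noteq> 0" by (rule no_zero_divisors[OF char_not_2 char_not_2])
    have b: "(2::'k) * 2 = 4" by simp
    show ?thesis using a unfolding b .
  qed
  then have q4: "4 * (1/4 :: 'k) = 1" by simp
  have sigS: "(sig :: _ \<Rightarrow> (nat,'k) fm) ` tet_S \<subseteq> FM f_S" by auto
  have tauS: "(tau :: _ \<Rightarrow> (nat \<times> nat,'k) fm) ` f_S \<subseteq> FM tet_S" by auto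
  have rels: "\<forall>r\<in>(tet_R :: (nat \<times> nat, 'k) fm set). Ev sig r \<in> pideal f_S f_R"
    using sig_rels by blast
  have rels': "\<forall>r\<in>(f_R :: (nat, 'k) fm set). Ev tau r \<in> pideal tet_S tet_R"
    using tau_rels[OF q4] by blast
  have iso: "plie_iso tet_S (tet_R :: (nat \<times> nat, 'k) fm set) f_S (f_R :: (nat, 'k) fm set) (hom sig f_S f_R)"
    by (rule iso_generic[OF tet_R_FM f_R_FM sigS tauS rels rels' gen_t[OF q4] gen_f[OF q4]])
  have H: "hom sig f_S f_R (pgen tet_S tet_R (i,j)) = pcls f_S f_R (sig (i,j) :: (nat,'k) fm)"
    if "i < 4" "j < 4" "i \<noteq> j" for i j
    unfolding pgen_def using that
    by (subst hom_pcls[OF tet_R_FM sigS rels]) (simp_all add: tet_S_def)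
  have Zs: "pgen f_S (f_R :: (nat,'k) fm set) n = pcls f_S f_R (vgen n)" for n by (simp add: pgen_def)
  show ?thesis
    apply (rule exI[where x = "hom sig f_S f_R"])
    apply (intro conjI iso)
    by (simp_all add: H Zs padd_pcls psmult_pcls pbr_pcls sig_def tab6_def)
qed


end
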